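(* Let $n\ge 2$ and sample $\mathbf C$ from the ensemble $\mathcal{R}_n$ described in the context. Then: (1) $\mathbf C$ is a symplectic matrix, i.e. $(\mathbf C\mathbf v)\odot(\mathbf C\mathbf w)=\mathbf v\odot\mathbf w$ for all $\mathbf v,\mathbf w\in\mathbb{Z}_2^{2n}$. (2) Let $\mathbf v_1,\dots,\mathbf v_{n-1}\in\mathbb{Z}_2^{2n}$ be a uniformly random basis of an $(n-1)$-dimensional isotropic subspace $V$, where $V$ is uniformly random subject to being symplectically orthogonal to $\mathbf f_1$ (sampled independently of $\mathbf C$), and let $\mathbf w_i:=\mathbf C\mathbf v_i$. Then the distribution of $(\mathbf w_1,\dots,\mathbf w_{n-1})$ is within total variation distance $\mathrm{negl}(n)$ of a uniformly random basis of a uniformly random $(n-1)$-dimensional isotropic subspace of $\mathbb{Z}_2^{2n}$.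
   Context: Symplectic inner product on $\mathbb{Z}_2^{2n}$: $(\mathbf a,\mathbf b)\odot(\mathbf a',\mathbf b')=\mathbf a\cdot\mathbf b'+\mathbf a'\cdot\mathbf b \pmod 2$ for $\mathbf a,\mathbf b,\mathbf a',\mathbf b'\in\mathbb{Z}_2^n$. A subspace is isotropic if every two of its vectors are symplectically orthogonal. The standard symplectic basis is $\mathbf e_1,\dots,\mathbf e_n,\mathbf f_1,\dots,\mathbf f_n$, where $\mathbf e_i$ has a single $1$ in position $i$ and $\mathbf f_i$ has a single $1$ in position $n+i$. The ensemble $\mathcal{R}_n$ (random symplectic hyperplane rotation): sample $\mathbf r\sim\mathbb{Z}_2^{2n}$ uniformly. Let $k$ be the smallest index $k\ge1$ with $r_{n+k}=1$; if no such index exists, output $\mathbf C=\mathbf I$. Otherwise let $\mathbf r'$ equal $\mathbf r$ with entries $n+1$ and $n+k$ swapped. Let $\mathbf C_0$ be the linear map with $\mathbf e_1\mapsto\mathbf e_1$, $\mathbf f_1\mapsto\mathbf r'$, $\mathbf e_j\mapsto\mathbf e_j+(\mathbf r'\odot\mathbf e_j)\mathbf e_1$ and $\mathbf f_j\mapsto\mathbf f_j+(\mathbf r'\odot\mathbf f_j)\mathbf e_1$ for $j=2,\dots,n$. Let $\mathbf\Pi$ be the matrix swapping $\mathbf e_1\leftrightarrow\mathbf e_k$ and $\mathbf f_1\leftrightarrow\mathbf f_k$ and fixing all other $\mathbf e_j,\mathbf f_j$. Output $\mathbf C:=\mathbf\Pi\mathbf C_0$ (so $\mathbf C\mathbf f_1=\mathbf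 r$). *)

theory Defs
  imports "HOL-Probability.Probability_Mass_Function" "HOL-Library.Z2"
begin

(* Vectors of Z_2^{2n} are functions nat => bit supported on {0..<2n}.
   0-based indexing: the 1-based position p corresponds to index p-1.
   So e_i (1<=i<=n) is the unit vector at index i-1 and f_i is the unit
   vector at index n+i-1. *)

definition vecs :: "nat \<Rightarrow> (nat \<Rightarrow> bit) set" where
  "vecs n = {v. \<forall>i. 2*n \<le> i \<longrightarrow> v i = 0}"

definition unitv :: "nat \<Rightarrow> nat \<Rightarrow> bit" where
  "unitv j = (\<lambda>i. if i = j then 1 else 0)"

definition evec :: "nat \<Rightarrow> nat \<Rightarrow> bit" where
  "evec i = unitv (i - 1)"

definition fvec :: "nat \<Rightarrow> nat \<Rightarrow> nat \<Rightarrow> bit" where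
  "fvec n i = unitv (n + i - 1)"

definition symp :: "nat \<Rightarrow> (nat \<Rightarrow> bit) \<Rightarrow> (nat \<Rightarrow> bit) \<Rightarrow> bit" where
  "symp n x y = (\<Sum>i<n. x i * y (n + i) + x (n + i) * y i)"

definition vadd :: "(nat \<Rightarrow> bit) \<Rightarrow> (nat \<Rightarrow> bit) \<Rightarrow> nat \<Rightarrow> bit" where
  "vadd x y = (\<lambda>i. x i + y i)"

definition vscale :: "bit \<Rightarrow> (nat \<Rightarrow> bit) \<Rightarrow> nat \<Rightarrow> bit" where
  "vscale c x = (\<lambda>i. c * x i)"

definition has_k :: "nat \<Rightarrow> (nat \<Rightarrow> bit) \<Rightarrow> bool" where
  "has_k n r \<longleftrightarrow> (\<exists>k. 1 \<le> k \<and> k \<le> n \<and> r (n + k - 1) = 1)"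

definition kidx :: "nat \<Rightarrow> (nat \<Rightarrow> bit) \<Rightarrow> nat" where
  "kidx n r = (LEAST k. 1 \<le> k \<and> k \<le> n \<and> r (n + k - 1) = 1)"

definition rprime :: "nat \<Rightarrow> (nat \<Rightarrow> bit) \<Rightarrow> nat \<Rightarrow> bit" where
  "rprime n r = (let k = kidx n r in
     (\<lambda>i. if i = n then r (n + k - 1) else if i = n + k - 1 then r n else r i))"

(* image under C_0 of the basis vector with 0-based index j (j < 2n):
   e_1 |-> e_1, f_1 |-> r', and for the other basis vectors b:
   b |-> b + (r' . b) e_1 *)
definition C0col :: "nat \<Rightarrow> (nat \<Rightarrow> bit) \<Rightarrow> nat \<Rightarrow> nat \<Rightarrow> bit" where
  "C0col n r j =
     (if j = 0 then evec 1
      else if j = n then rprime n r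
      else vadd (unitv j) (vscale (symp n (rprime n r) (unitv j)) (evec 1)))"

definition C0map :: "nat \<Rightarrow> (nat \<Rightarrow> bit) \<Rightarrow> (nat \<Rightarrow> bit) \<Rightarrow> nat \<Rightarrow> bit" where
  "C0map n r x = (\<lambda>i. \<Sum>j<2*n. x j * C0col n r j i)"

(* index permutation swapping (1-based) 1 <-> k and n+1 <-> n+k *)
definition piidx :: "nat \<Rightarrow> nat \<Rightarrow> nat \<Rightarrow> nat" where
  "piidx n k i = (if i = 0 then k - 1 else if i = k - 1 then 0
                  else if i = n then n + k - 1 else if i = n + k - 1 then n else i)"

definition Pimap :: "nat \<Rightarrow> nat \<Rightarrow> (nat \<Rightarrow> bit) \<Rightarrow> nat \<Rightarrow> bit" where
  "Pimap n k x = (\<lambda>i. x (piidx n k i))"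

definition Cmap :: "nat \<Rightarrow> (nat \<Rightarrow> bit) \<Rightarrow> (nat \<Rightarrow> bit) \<Rightarrow> nat \<Rightarrow> bit" where
  "Cmap n r x = (if has_k n r then Pimap n (kidx n r) (C0map n r x) else x)"

definition lincomb :: "(nat \<Rightarrow> bit) \<Rightarrow> (nat \<Rightarrow> bit) list \<Rightarrow> nat \<Rightarrow> bit" where
  "lincomb c vs = (\<lambda>i. \<Sum>j<length vs. c j * (vs ! j) i)"

definition lspan :: "(nat \<Rightarrow> bit) list \<Rightarrow> (nat \<Rightarrow> bit) set" where
  "lspan vs = {lincomb c vs | c. True}"

definition lin_indep :: "(nat \<Rightarrow> bit) list \<Rightarrow> bool" where
  "lin_indep vs \<longleftrightarrow> (\<forall>c. lincomb c vs = (\<lambda>_. 0) \<longrightarrow> (\<forall>j<length vs. c j = 0))"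

definition bases_of :: "(nat \<Rightarrow> bit) set \<Rightarrow> (nat \<Rightarrow> bit) list set" where
  "bases_of V = {vs. lin_indep vs \<and> lspan vs = V}"

definition subspace_dim :: "nat \<Rightarrow> nat \<Rightarrow> (nat \<Rightarrow> bit) set \<Rightarrow> bool" where
  "subspace_dim n d V \<longleftrightarrow> V \<subseteq> vecs n \<and> (\<exists>vs. length vs = d \<and> vs \<in> bases_of V)"

definition isotropic :: "nat \<Rightarrow> (nat \<Rightarrow> bit) set \<Rightarrow> bool" where
  "isotropic n V \<longleftrightarrow> (\<forall>v\<in>V. \<forall>w\<in>V. symp n v w = 0)"

definition iso_subspaces :: "nat \<Rightarrow> nat \<Rightarrow> (nat \<Rightarrow> bit) set set" where
  "iso_subspaces n d = {V. subspace_dim n d V \<and> isotropic n V}"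

definition tvd :: "'a pmf \<Rightarrow> 'a pmf \<Rightarrow> real" where
  "tvd p q = (SUP A. \<bar>measure_pmf.prob p A - measure_pmf.prob q A\<bar>)"

definition negligible :: "(nat \<Rightarrow> real) \<Rightarrow> bool" where
  "negligible \<epsilon> \<longleftrightarrow> (\<forall>c::nat. \<exists>N. \<forall>n\<ge>N. \<bar>\<epsilon> n\<bar> \<le> 1 / real n ^ c)"

definition out_dist :: "nat \<Rightarrow> (nat \<Rightarrow> bit) list pmf" where
  "out_dist n =
     do { r \<leftarrow> pmf_of_set (vecs n);
          V \<leftarrow> pmf_of_set {V \<in> iso_subspaces n (n - 1). \<forall>v\<in>V. symp n v (fvec n 1) = 0};
          vs \<leftarrow> pmf_of_set (bases_of V);
          return_pmf (map (Cmap n r) vs) }"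

definition ideal_dist :: "nat \<Rightarrow> (nat \<Rightarrow> bit) list pmf" where
  "ideal_dist n =
     do { W \<leftarrow> pmf_of_set (iso_subspaces n (n - 1));
          pmf_of_set (bases_of W) }"

end

theory Submission
  imports Defs "HOL-Library.FuncSet" "HOL-Real_Asymp.Real_Asymp"
begin

declare add_bit_eq_xor[simp del] mult_bit_eq_and[simp del]

lemma bit_add_self[simp]: "(x::bit) + x = 0"
  by (cases x) simp_all

lemma bit_cases2: "(x::bit) = 0 \<or> x = 1" by (cases x) simp_all

lemma bit_UNIV: "(UNIV::bit set) = {0,1}"
  using bit_cases2 by auto

lemma card_bit: "card (UNIV::bit set) = 2"
  by (simp add: bit_UNIV)

lemma finite_bit[simp]: "finite (UNIV::bit set)"
  by (simp add: bit_UNIV)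

definition supp :: "nat set \<Rightarrow> (nat \<Rightarrow> bit) set" where
  "supp I = {v. \<forall>i. i \<notin> I \<longrightarrow> v i = 0}"

lemma supp_bij: "bij_betw (\<lambda>v. restrict v I) (supp I) (PiE I (\<lambda>_. UNIV))"
  by (rule bij_betw_byWitness[where f'="\<lambda>f i. if i \<in> I then f i else 0"])
     (auto simp: supp_def fun_eq_iff PiE_def extensional_def)

lemma card_supp: "finite I \<Longrightarrow> card (supp I) = 2 ^ card I"
  using bij_betw_same_card[OF supp_bij[of I]] by (simp add: card_PiE card_bit)

lemma finite_supp: "finite I \<Longrightarrow> finite (supp I)"
  using bij_betw_finite[OF supp_bij[of I]] by (simp add: finite_PiE)

lemma vecs_supp: "vecs n = supp {..<2*n}"
  by (auto simp: vecs_def supp_def)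

lemma card_vecs: "card (vecs n) = 2 ^ (2*n)"
  by (simp add: vecs_supp card_supp)

lemma finite_vecs: "finite (vecs n)"
  by (simp add: vecs_supp finite_supp)

lemma has_k_iff: "has_k n r \<longleftrightarrow> (\<exists>i. n \<le> i \<and> i < 2*n \<and> r i = 1)"
  unfolding has_k_def
proof
  assume "\<exists>k\<ge>1. k \<le> n \<and> r (n + k - 1) = 1"
  then obtain k where "1 \<le> k" "k \<le> n" "r (n+k-1) = 1" by blast
  then show "\<exists>i. n \<le> i \<and> i < 2*n \<and> r i = 1" by (intro exI[of _ "n+k-1"]) auto
next
  assume "\<exists>i. n \<le> i \<and> i < 2*n \<and> r i = 1"
  then obtain i where "n \<le> i" "i < 2*n" "r i = 1" by blast
  then show "\<exists>k\<ge>1. k \<le> n \<and> r (n + k - 1) = 1" by (intro exI[of _ "i - n + 1"]) auto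
qed

lemma bad_supp: "{r \<in> vecs n. \<not> has_k n r} = supp {..<n}"
  unfolding has_k_iff vecs_def supp_def
  apply auto
  by (metis bit_not_one_iff leI less_le_trans mult_2 trans_less_add1 order.refl)

lemma card_bad: "card {r \<in> vecs n. \<not> has_k n r} = 2 ^ n"
  by (simp add: bad_supp card_supp)

lemma kidx_props:
  assumes "has_k n r"
  shows "1 \<le> kidx n r" "kidx n r \<le> n" "r (n + kidx n r - 1) = 1"
proof -
  have "1 \<le> kidx n r \<and> kidx n r \<le> n \<and> r (n + kidx n r - 1) = 1"
    unfolding kidx_def using assms[unfolded has_k_def] by (rule LeastI_ex)
  then show "1 \<le> kidx n r" "kidx n r \<le> n" "r (n + kidx n r - 1) = 1" by auto
qed

lemma symp_comm: "symp n x y = symp n y x"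
  unfolding symp_def by (rule sum.cong) (auto simp: algebra_simps)

lemma symp_self[simp]: "symp n x x = 0"
proof -
  have "symp n x x = (\<Sum>i<n. 0)"
    unfolding symp_def by (rule sum.cong) (auto simp: mult.commute)
  then show ?thesis by simp
qed

lemma symp_sum_left:
  assumes "finite J"
  shows "symp n (\<lambda>i. \<Sum>j\<in>J. a j * X j i) y = (\<Sum>j\<in>J. a j * symp n (X j) y)"
proof -
  have "symp n (\<lambda>i. \<Sum>j\<in>J. a j * X j i) y
      = (\<Sum>i<n. \<Sum>j\<in>J. a j * (X j i * y (n + i) + X j (n + i) * y i))"
    unfolding symp_def
    by (rule sum.cong) (simp_all add: sum_distrib_right sum.distrib[symmetric] distrib_left mult.assoc)
  also have "\<dots> = (\<Sum>j\<in>J. \<Sum>i<n. a j * (X j i * y (n + i) + X j (n + i) * y i))"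
    by (rule sum.swap)
  also have "\<dots> = (\<Sum>j\<in>J. a j * symp n (X j) y)"
    unfolding symp_def by (simp add: sum_distrib_left)
  finally show ?thesis .
qed

lemma symp_sum_right:
  assumes "finite J"
  shows "symp n y (\<lambda>i. \<Sum>j\<in>J. a j * X j i) = (\<Sum>j\<in>J. a j * symp n y (X j))"
  using symp_sum_left[OF assms] by (simp add: symp_comm)

lemma symp_add_left: "symp n (\<lambda>i. x i + y i) z = symp n x z + symp n y z"
  unfolding symp_def by (simp add: sum.distrib[symmetric] algebra_simps)

lemma symp_add_right: "symp n z (\<lambda>i. x i + y i) = symp n z x + symp n z y"
  using symp_add_left by (simp add: symp_comm)

lemma symp_scale_left: "symp n (\<lambda>i. c * x i) z = c * symp n x z"
  unfolding symp_def by (simp add: sum_distrib_left algebra_simps)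

lemma symp_scale_right: "symp n z (\<lambda>i. c * x i) = c * symp n z x"
  using symp_scale_left by (simp add: symp_comm)

lemma symp_zero_left[simp]: "symp n (\<lambda>_. 0) z = 0"
  unfolding symp_def by simp

lemma symp_zero_right[simp]: "symp n z (\<lambda>_. 0) = 0"
  unfolding symp_def by simp

lemma symp_unit_right:
  "symp n x (unitv j) = (if j < n then x (n + j) else if j < 2*n then x (j - n) else 0)"
proof -
  have a: "symp n x (unitv j) = (\<Sum>i<n. (if j = n + i then x i else 0) + (if j = i then x (n+i) else 0))"
    unfolding symp_def unitv_def by (rule sum.cong) auto
  have b: "(\<Sum>i<n. (if j = n + i then x i else 0)) = (if n \<le> j \<and> j < 2*n then x (j - n) else 0)"
  proof (cases "n \<le> j")
    case True
    have "(\<Sum>i<n. (if j = n + i then x i else 0)) = (\<Sum>i<n. (if i = j - n then x i else 0))"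
      by (rule sum.cong) (use True in auto)
    then show ?thesis using True by (auto simp: sum.delta)
  next
    case False
    then show ?thesis by (auto intro!: sum.neutral)
  qed
  have c: "(\<Sum>i<n. (if j = i then x (n+i) else 0)) = (if j < n then x (n + j) else 0)"
    by (simp add: sum.delta)
  show ?thesis
    unfolding a sum.distrib b c by auto
qed

lemma symp_unit_left:
  "symp n (unitv j) x = (if j < n then x (n + j) else if j < 2*n then x (j - n) else 0)"
  by (simp add: symp_comm symp_unit_right)

lemma nondegen:
  assumes "x \<in> vecs n" "\<And>j. j < 2*n \<Longrightarrow> symp n x (unitv j) = 0"
  shows "x = (\<lambda>_. 0)"
proof
  fix i
  show "x i = 0"
  proof (cases "i < 2*n")
    case True
    show ?thesis
    proof (cases "i < n")
      case True
      with assms(2)[of "n+i"] show ?thesis by (simp add: symp_unit_right)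
    next
      case False
      have "i - n < 2*n" "i - n < n" using False \<open>i < 2*n\<close> by auto
      with assms(2)[of "i-n"] have "x (n + (i - n)) = 0" by (simp add: symp_unit_right)
      then show ?thesis using False by simp
    qed
  next
    case False
    then show ?thesis using assms(1) by (simp add: vecs_def)
  qed
qed

lemma vec_expand:
  assumes "x \<in> vecs n"
  shows "x = (\<lambda>i. \<Sum>j<2*n. x j * unitv j i)"
proof
  fix i
  have "(\<Sum>j<2*n. x j * unitv j i) = (\<Sum>j<2*n. if j = i then x j else 0)"
    by (rule sum.cong) (auto simp: unitv_def)
  then show "x i = (\<Sum>j<2*n. x j * unitv j i)"
    using assms by (auto simp: vecs_def sum.delta)
qed

lemma unitv_vecs: "j < 2*n \<Longrightarrow> unitv j \<in> vecs n"
  by (auto simp: unitv_def vecs_def)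

definition lin_map :: "((nat \<Rightarrow> bit) \<Rightarrow> (nat \<Rightarrow> bit)) \<Rightarrow> bool" where
  "lin_map g \<longleftrightarrow> (\<forall>(J::nat set) a X. finite J \<longrightarrow>
      g (\<lambda>i. \<Sum>j\<in>J. a j * X j i) = (\<lambda>i. \<Sum>j\<in>J. a j * g (X j) i))"

lemma lin_mapD:
  assumes "lin_map g" "finite (J::nat set)"
  shows "g (\<lambda>i. \<Sum>j\<in>J. a j * X j i) = (\<lambda>i. \<Sum>j\<in>J. a j * g (X j) i)"
proof -
  have h: "\<forall>(J::nat set) a X. finite J \<longrightarrow>
      g (\<lambda>i. \<Sum>j\<in>J. a j * X j i) = (\<lambda>i. \<Sum>j\<in>J. a j * g (X j) i)"
    using assms(1) unfolding lin_map_def .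
  have "finite J \<longrightarrow> g (\<lambda>i. \<Sum>j\<in>J. a j * X j i) = (\<lambda>i. \<Sum>j\<in>J. a j * g (X j) i)"
    by (rule h[THEN spec[where x=J], THEN spec[where x=a], THEN spec[where x=X]])
  then show ?thesis using assms(2) by (rule mp)
qed

lemma lin_map_zero: "lin_map g \<Longrightarrow> g (\<lambda>_. 0) = (\<lambda>_. 0)"
  using lin_mapD[of g "{}"] by simp

lemma lin_map_add:
  assumes "lin_map g"
  shows "g (\<lambda>i. x i + y i) = (\<lambda>i. g x i + g y i)"
proof -
  have "g (\<lambda>i. \<Sum>j\<in>{0,1::nat}. 1 * (if j = 0 then x else y) i)
        = (\<lambda>i. \<Sum>j\<in>{0,1::nat}. 1 * g (if j = 0 then x else y) i)"
    by (rule lin_mapD[OF assms]) simp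
  then show ?thesis by simp
qed

lemma lin_map_lincomb:
  assumes "lin_map g"
  shows "g (lincomb c vs) = lincomb c (map g vs)"
proof -
  have "g (lincomb c vs) = (\<lambda>i. \<Sum>j<length vs. c j * g (vs ! j) i)"
    unfolding lincomb_def by (rule lin_mapD[OF assms]) simp
  also have "\<dots> = lincomb c (map g vs)"
    unfolding lincomb_def by (rule ext, rule sum.cong) auto
  finally show ?thesis .
qed

lemma vecs_add: "x \<in> vecs n \<Longrightarrow> y \<in> vecs n \<Longrightarrow> (\<lambda>i. x i + y i) \<in> vecs n"
  by (auto simp: vecs_def)

lemma vecs_zero[simp]: "(\<lambda>_. 0) \<in> vecs n"
  by (auto simp: vecs_def)

lemma symp_from_basis:
  assumes g: "lin_map g"
    and b: "\<And>j l. j < 2*n \<Longrightarrow> l < 2*n \<Longrightarrow> symp n (g (unitv j)) (g (unitv l)) = symp n (unitv j) (unitv l)"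
    and x: "x \<in> vecs n" and y: "y \<in> vecs n"
  shows "symp n (g x) (g y) = symp n x y"
proof -
  have gx: "g x = (\<lambda>i. \<Sum>j<2*n. x j * g (unitv j) i)"
    by (subst vec_expand[OF x]) (rule lin_mapD[OF g], simp)
  have gy: "g y = (\<lambda>i. \<Sum>j<2*n. y j * g (unitv j) i)"
    by (subst vec_expand[OF y]) (rule lin_mapD[OF g], simp)
  have "symp n (g x) (g y) = (\<Sum>j<2*n. x j * (\<Sum>l<2*n. y l * symp n (g (unitv j)) (g (unitv l))))"
    unfolding gx gy by (simp add: symp_sum_left symp_sum_right)
  also have "\<dots> = (\<Sum>j<2*n. x j * (\<Sum>l<2*n. y l * symp n (unitv j) (unitv l)))"
    using b by (auto intro!: sum.cong)
  also have "\<dots> = symp n (\<lambda>i. \<Sum>j<2*n. x j * unitv j i) (\<lambda>i. \<Sum>l<2*n. y l * unitv l i)"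
    by (simp add: symp_sum_left symp_sum_right)
  also have "\<dots> = symp n x y"
  proof -
    have ex: "(\<lambda>i. \<Sum>j<2*n. x j * unitv j i) = x" by (rule vec_expand[OF x, symmetric])
    have ey: "(\<lambda>i. \<Sum>l<2*n. y l * unitv l i) = y" by (rule vec_expand[OF y, symmetric])
    show ?thesis by (simp only: ex ey)
  qed
  finally show ?thesis .
qed

definition good_map :: "nat \<Rightarrow> ((nat \<Rightarrow> bit) \<Rightarrow> (nat \<Rightarrow> bit)) \<Rightarrow> bool" where
  "good_map n g \<longleftrightarrow> lin_map g \<and> (\<forall>x\<in>vecs n. g x \<in> vecs n)
     \<and> (\<forall>x\<in>vecs n. \<forall>y\<in>vecs n. symp n (g x) (g y) = symp n x y)"

lemma good_inj:
  assumes "good_map n g"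
  shows "inj_on g (vecs n)"
proof
  fix x y assume x: "x \<in> vecs n" and y: "y \<in> vecs n" and e: "g x = g y"
  have g: "lin_map g" and sy: "\<And>x y. x \<in> vecs n \<Longrightarrow> y \<in> vecs n \<Longrightarrow> symp n (g x) (g y) = symp n x y"
    using assms by (auto simp: good_map_def)
  define d where "d = (\<lambda>i. x i + y i)"
  have d: "d \<in> vecs n" unfolding d_def by (rule vecs_add[OF x y])
  have gd: "g d = (\<lambda>_. 0)" unfolding d_def lin_map_add[OF g] e by simp
  have "d = (\<lambda>_. 0)"
  proof (rule nondegen[OF d])
    fix j assume "j < 2*n"
    then have u: "unitv j \<in> vecs n" by (rule unitv_vecs)
    show "symp n d (unitv j) = 0" using sy[OF d u] gd by simp
  qed
  then have "\<And>i. x i + y i = 0" unfolding d_def by meson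
  then show "x = y"
    by (metis add_diff_cancel_left' bit_add_self diff_add_cancel ext)
qed

lemma good_surj:
  assumes "good_map n g"
  shows "g ` vecs n = vecs n"
  by (rule endo_inj_surj[OF finite_vecs]) (use assms good_inj in \<open>auto simp: good_map_def\<close>)

lemma good_id: "good_map n id"
  by (auto simp: good_map_def lin_map_def)

lemma Pimap_lin: "lin_map (Pimap n k)"
  by (simp add: lin_map_def Pimap_def)

lemma piidx_high: "1 \<le> k \<Longrightarrow> k \<le> n \<Longrightarrow> 2*n \<le> i \<Longrightarrow> piidx n k i = i"
  by (auto simp: piidx_def)

lemma Pimap_vecs: "1 \<le> k \<Longrightarrow> k \<le> n \<Longrightarrow> x \<in> vecs n \<Longrightarrow> Pimap n k x \<in> vecs n"
  by (auto simp: vecs_def Pimap_def piidx_high)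

definition pswap :: "nat \<Rightarrow> nat \<Rightarrow> nat" where
  "pswap k i = (if i = 0 then k - 1 else if i = k - 1 then 0 else i)"

lemma piidx_lo: "1 \<le> k \<Longrightarrow> k \<le> n \<Longrightarrow> i < n \<Longrightarrow> piidx n k i = pswap k i"
  by (auto simp: piidx_def pswap_def)

lemma piidx_hi: "1 \<le> k \<Longrightarrow> k \<le> n \<Longrightarrow> i < n \<Longrightarrow> piidx n k (n + i) = n + pswap k i"
  by (auto simp: piidx_def pswap_def)

lemma pswap_bij: "1 \<le> k \<Longrightarrow> k \<le> n \<Longrightarrow> bij_betw (pswap k) {..<n} {..<n}"
  by (rule bij_betw_byWitness[where f'="pswap k"]) (auto simp: pswap_def)

lemma Pimap_symp:
  assumes "1 \<le> k" "k \<le> n"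
  shows "symp n (Pimap n k x) (Pimap n k y) = symp n x y"
proof -
  define h where "h i = x i * y (n + i) + x (n + i) * y i" for i
  have "symp n (Pimap n k x) (Pimap n k y) = (\<Sum>i<n. h (pswap k i))"
    unfolding symp_def Pimap_def h_def
    by (rule sum.cong) (use assms in \<open>auto simp: piidx_lo piidx_hi\<close>)
  also have "\<dots> = (\<Sum>i<n. h i)"
    by (rule sum.reindex_bij_betw[OF pswap_bij[OF assms]])
  finally show ?thesis unfolding symp_def h_def .
qed

lemma Pimap_good: "1 \<le> k \<Longrightarrow> k \<le> n \<Longrightarrow> good_map n (Pimap n k)"
  by (simp add: good_map_def Pimap_lin Pimap_vecs Pimap_symp)

lemma C0map_lin: "lin_map (C0map n r)"
  unfolding lin_map_def C0map_def
proof (intro allI impI ext)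
  fix J :: "nat set" and a X i assume "finite J"
  have "(\<Sum>l<2*n. (\<Sum>j\<in>J. a j * X j l) * C0col n r l i)
      = (\<Sum>l<2*n. \<Sum>j\<in>J. a j * (X j l * C0col n r l i))"
    by (simp add: sum_distrib_right mult.assoc)
  also have "\<dots> = (\<Sum>j\<in>J. \<Sum>l<2*n. a j * (X j l * C0col n r l i))"
    by (rule sum.swap)
  also have "\<dots> = (\<Sum>j\<in>J. a j * (\<Sum>l<2*n. X j l * C0col n r l i))"
    by (simp add: sum_distrib_left)
  finally show "(\<Sum>l<2*n. (\<Sum>j\<in>J. a j * X j l) * C0col n r l i)
      = (\<Sum>j\<in>J. a j * (\<Sum>l<2*n. X j l * C0col n r l i))" .
qed

lemma C0map_unit: "j < 2*n \<Longrightarrow> C0map n r (unitv j) = C0col n r j"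
proof
  fix i assume j: "j < 2*n"
  have "(\<Sum>l<2*n. unitv j l * C0col n r l i) = (\<Sum>l<2*n. if l = j then C0col n r l i else 0)"
    by (rule sum.cong) (auto simp: unitv_def)
  then show "C0map n r (unitv j) i = C0col n r j i"
    using j by (simp add: C0map_def sum.delta)
qed

lemma rprime_vecs:
  assumes "has_k n r" "r \<in> vecs n"
  shows "rprime n r \<in> vecs n"
  unfolding vecs_def
proof (intro CollectI allI impI)
  fix i assume i: "2*n \<le> i"
  note k = kidx_props[OF assms(1)]
  have "i \<noteq> n" "i \<noteq> n + kidx n r - 1" using k i by auto
  moreover have "r i = 0" using assms(2) i by (simp add: vecs_def)
  ultimately show "rprime n r i = 0" by (simp add: rprime_def Let_def)
qed

lemma rprime_n:
  assumes "has_k n r"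
  shows "rprime n r n = 1"
  using kidx_props[OF assms] by (simp add: rprime_def Let_def)

lemma C0col_vecs:
  assumes "has_k n r" "r \<in> vecs n" "j < 2*n"
  shows "C0col n r j \<in> vecs n"
proof -
  have u0: "unitv 0 \<in> vecs n" using assms(3) by (intro unitv_vecs) simp
  have uj: "unitv j \<in> vecs n" using assms(3) by (rule unitv_vecs)
  have "vadd (unitv j) (vscale c (evec 1)) \<in> vecs n" for c
    using u0 uj by (simp add: vadd_def vscale_def evec_def vecs_def)
  then show ?thesis
    using rprime_vecs[OF assms(1,2)] u0 by (simp add: C0col_def evec_def)
qed

lemma C0map_vecs:
  assumes "has_k n r" "r \<in> vecs n"
  shows "C0map n r x \<in> vecs n"
  unfolding vecs_def
proof (intro CollectI allI impI)
  fix i assume i: "2*n \<le> i"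
  have "\<And>j. j < 2*n \<Longrightarrow> C0col n r j i = 0"
    using C0col_vecs[OF assms] i by (simp add: vecs_def)
  then show "C0map n r x i = 0" by (simp add: C0map_def)
qed

lemma C0col_symp:
  assumes "has_k n r" "n \<ge> 2" "j < 2*n" "l < 2*n"
  shows "symp n (C0col n r j) (C0col n r l) = symp n (unitv j) (unitv l)"
proof -
  define rp where "rp = rprime n r"
  define c where "c l = symp n rp (unitv l)" for l
  have n0: "0 < n" using assms by simp
  have rpn: "rp n = 1" unfolding rp_def by (rule rprime_n[OF assms(1)])
  have e1: "symp n (unitv 0) rp = 1" using n0 rpn by (simp add: symp_unit_left)
  have e2: "symp n rp (unitv 0) = 1" using e1 by (simp add: symp_comm)
  have z: "symp n (unitv j') (unitv 0) = 0" if "j' \<noteq> n" for j'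
    using that unfolding symp_unit_left by (auto simp: unitv_def)
  have z': "symp n (unitv 0) (unitv j') = 0" if "j' \<noteq> n" for j'
    using z[OF that] by (simp add: symp_comm)
  have un0: "symp n (unitv 0) (unitv n) = 1" using n0 unfolding symp_unit_left by (simp add: unitv_def)
  have un0': "symp n (unitv n) (unitv 0) = 1" using un0 by (simp add: symp_comm)
  have col0: "C0col n r 0 = unitv 0" by (simp add: C0col_def evec_def)
  have coln: "C0col n r n = rp" using n0 by (simp add: C0col_def rp_def)
  have colo: "C0col n r j' = (\<lambda>i. unitv j' i + c j' * unitv 0 i)" if "j' \<noteq> 0" "j' \<noteq> n" for j'
    using that by (simp add: C0col_def vadd_def vscale_def evec_def c_def rp_def)
  have n0': "n \<noteq> 0" using n0 by simp
  consider "j = 0" | "j = n" | "j \<noteq> 0 \<and> j \<noteq> n" by blast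
  then show ?thesis
  proof cases
    case 1
    consider "l = 0" | "l = n" | "l \<noteq> 0 \<and> l \<noteq> n" by blast
    then show ?thesis
    proof cases
      case 1 with \<open>j = 0\<close> col0 show ?thesis by simp
    next
      case 2 with \<open>j = 0\<close> col0 coln e1 un0 show ?thesis by simp
    next
      case 3 with \<open>j = 0\<close> col0 colo[of l] z'[of l] show ?thesis
        by (simp add: symp_add_right symp_scale_right)
    qed
  next
    case 2
    consider "l = 0" | "l = n" | "l \<noteq> 0 \<and> l \<noteq> n" by blast
    then show ?thesis
    proof cases
      case 1 with \<open>j = n\<close> col0 coln e2 un0' show ?thesis by simp
    next
      case 2 with \<open>j = n\<close> coln show ?thesis by simp
    next
      case 3
      have "symp n (unitv n) (unitv l) = 0"
        using 3 n0 unfolding symp_unit_left by (auto simp: unitv_def)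
      with 3 \<open>j = n\<close> coln colo[of l] e2 show ?thesis
        by (simp add: symp_add_right symp_scale_right c_def)
    qed
  next
    case 3
    consider "l = 0" | "l = n" | "l \<noteq> 0 \<and> l \<noteq> n" by blast
    then show ?thesis
    proof cases
      case 1 with 3 col0 colo[of j] z[of j] show ?thesis
        by (simp add: symp_add_left symp_scale_left)
    next
      case 2
      have "symp n (unitv j) (unitv n) = 0"
        using 3 n0 unfolding symp_unit_left by (auto simp: unitv_def)
      with 3 \<open>l = n\<close> coln colo[of j] e1 show ?thesis
        by (simp add: symp_add_left symp_scale_left c_def symp_comm[of n _ rp])
    next
      case 4: 3
      with 3 colo[of j] colo[of l] z[of j] z'[of l] show ?thesis
        by (simp add: symp_add_left symp_add_right symp_scale_left symp_scale_right)
    qed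
  qed
qed

lemma Cmap_good:
  assumes "r \<in> vecs n" "n \<ge> 2"
  shows "good_map n (Cmap n r)"
proof (cases "has_k n r")
  case False
  then have "Cmap n r = id" by (auto simp: Cmap_def fun_eq_iff)
  then show ?thesis by (simp add: good_id)
next
  case True
  note kp = kidx_props[OF True]
  have C: "Cmap n r = Pimap n (kidx n r) \<circ> C0map n r"
    using True by (auto simp: Cmap_def fun_eq_iff)
  have lin: "lin_map (Cmap n r)"
    unfolding C lin_map_def using C0map_lin[of n r] Pimap_lin[of n "kidx n r"]
    by (simp add: lin_map_def)
  show ?thesis
    unfolding good_map_def
  proof (intro conjI ballI lin)
    fix x assume "x \<in> vecs n"
    show "Cmap n r x \<in> vecs n"
      unfolding C using Pimap_vecs[OF kp(1,2) C0map_vecs[OF True assms(1)]] by simp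
  next
    fix x y assume x: "x \<in> vecs n" and y: "y \<in> vecs n"
    show "symp n (Cmap n r x) (Cmap n r y) = symp n x y"
    proof (rule symp_from_basis[OF lin _ x y])
      fix j l assume j: "j < 2*n" and l: "l < 2*n"
      show "symp n (Cmap n r (unitv j)) (Cmap n r (unitv l)) = symp n (unitv j) (unitv l)"
        unfolding C using Pimap_symp[OF kp(1,2)] C0map_unit[OF j] C0map_unit[OF l]
          C0col_symp[OF True assms(2) j l] by simp
    qed
  qed
qed

definition tau :: "nat \<Rightarrow> (nat \<Rightarrow> bit) \<Rightarrow> nat \<Rightarrow> bit" where
  "tau n r = Cmap n r (fvec n 1)"

lemma tau_bad: "\<not> has_k n r \<Longrightarrow> tau n r = fvec n 1"
  by (simp add: tau_def Cmap_def)

lemma tau_good: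
  assumes "has_k n r" "n \<ge> 2"
  shows "tau n r = (\<lambda>i. r (pswap (kidx n r) i))"
proof -
  note kp = kidx_props[OF assms(1)]
  have "fvec n 1 = unitv n" by (simp add: fvec_def)
  then have "C0map n r (fvec n 1) = rprime n r"
    using C0map_unit[of n n r] assms(2) by (simp add: C0col_def)
  then show ?thesis
    using assms kp
    by (auto simp: tau_def Cmap_def Pimap_def fun_eq_iff rprime_def piidx_def pswap_def Let_def)
qed

lemma tau_hi: "has_k n r \<Longrightarrow> n \<ge> 2 \<Longrightarrow> n \<le> i \<Longrightarrow> tau n r i = r i"
  using kidx_props[of n r] by (auto simp: tau_good pswap_def)

lemma has_k_cong: "(\<And>i. n \<le> i \<Longrightarrow> r' i = r i) \<Longrightarrow> has_k n r' = has_k n r"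
  unfolding has_k_def by (metis le_add1 add_diff_assoc le_add_diff_inverse)

lemma kidx_cong: "(\<And>i. n \<le> i \<Longrightarrow> r' i = r i) \<Longrightarrow> kidx n r' = kidx n r"
  unfolding kidx_def by (metis le_add1 add_diff_assoc le_add_diff_inverse)

lemma tau_has_k: "has_k n r \<Longrightarrow> n \<ge> 2 \<Longrightarrow> has_k n (tau n r)"
  using has_k_cong[of n "tau n r" r] tau_hi by blast

lemma tau_kidx: "has_k n r \<Longrightarrow> n \<ge> 2 \<Longrightarrow> kidx n (tau n r) = kidx n r"
  using kidx_cong[of n "tau n r" r] tau_hi by blast

lemma pswap_pswap[simp]: "pswap k (pswap k i) = i"
  by (auto simp: pswap_def)

lemma tau_tau:
  assumes a: "has_k n r" "n \<ge> 2"
  shows "tau n (tau n r) = r"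
proof -
  define k where "k = kidx n r"
  have t1: "tau n r = (\<lambda>i. r (pswap k i))" using tau_good[OF a] k_def by simp
  have t2: "tau n (tau n r) = (\<lambda>i. (tau n r) (pswap k i))"
    using tau_good[OF tau_has_k[OF a] a(2)] tau_kidx[OF a] k_def by simp
  show ?thesis unfolding t2 by (simp add: t1)
qed

lemma fvec1_vecs: "n \<ge> 1 \<Longrightarrow> fvec n 1 \<in> vecs n"
  by (simp add: fvec_def unitv_vecs)

lemma tau_vecs: "r \<in> vecs n \<Longrightarrow> n \<ge> 2 \<Longrightarrow> tau n r \<in> vecs n"
  using Cmap_good[of r n] fvec1_vecs[of n] by (simp add: tau_def good_map_def)

lemma tau_bij:
  assumes "n \<ge> 2"
  shows "bij_betw (tau n) {r \<in> vecs n. has_k n r} {r \<in> vecs n. has_k n r}"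
  by (rule bij_betw_byWitness[where f'="tau n"])
     (auto simp: tau_tau[OF _ assms] intro: tau_vecs[OF _ assms] tau_has_k[OF _ assms])

definition Fm :: "nat \<Rightarrow> (nat \<Rightarrow> bit) \<Rightarrow> nat \<Rightarrow> bit" where
  "Fm n x = (\<lambda>i. if i < n then x (n + i) else if i < 2*n then x (i - n) else 0)"

lemma Fm_lo: "i < n \<Longrightarrow> Fm n x i = x (n + i)"
  by (simp add: Fm_def)

lemma Fm_hi: "i < n \<Longrightarrow> Fm n x (n + i) = x i"
  by (simp add: Fm_def)

lemma Fm_good: "good_map n (Fm n)"
  unfolding good_map_def
proof (intro conjI ballI)
  show "lin_map (Fm n)"
    unfolding lin_map_def
  proof (intro allI impI ext)
    fix J :: "nat set" and a X i
    show "Fm n (\<lambda>i. \<Sum>j\<in>J. a j * X j i) i = (\<Sum>j\<in>J. a j * Fm n (X j) i)"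
      by (cases "i < n"; cases "i < 2*n") (simp_all add: Fm_def)
  qed
next
  fix x assume "x \<in> vecs n" then show "Fm n x \<in> vecs n" by (auto simp: vecs_def Fm_def)
next
  fix x y
  have "symp n (Fm n x) (Fm n y) = (\<Sum>i<n. x (n + i) * y i + x i * y (n + i))"
    unfolding symp_def by (rule sum.cong) (simp_all add: Fm_lo Fm_hi)
  also have "\<dots> = symp n x y"
    unfolding symp_def by (rule sum.cong) (simp_all add: add.commute)
  finally show "symp n (Fm n x) (Fm n y) = symp n x y" .
qed

lemma Fm_has_k:
  assumes "y \<in> vecs n" "y \<noteq> (\<lambda>_. 0)" "\<not> has_k n y"
  shows "has_k n (Fm n y)"
proof -
  have "\<exists>i. y i \<noteq> 0"
  proof (rule ccontr)
    assume "\<not> (\<exists>i. y i \<noteq> 0)"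
    then have "y = (\<lambda>_. 0)" by auto
    then show False using assms(2) by simp
  qed
  then obtain i where i: "y i \<noteq> 0" by blast
  then have "i < 2*n" using assms(1) by (auto simp: vecs_def not_less[symmetric])
  have "i < n"
  proof (rule ccontr)
    assume "\<not> i < n"
    then show False using assms(3) \<open>i < 2*n\<close> i by (auto simp: has_k_iff)
  qed
  then show ?thesis using i by (auto simp: has_k_iff Fm_def intro!: exI[of _ "n+i"])
qed

lemma lincomb_unit: "j < length vs \<Longrightarrow> lincomb (\<lambda>l. if l = j then 1 else 0) vs = vs ! j"
proof
  fix i assume "j < length vs"
  have "(\<Sum>l<length vs. (if l = j then 1 else 0) * (vs ! l) i) = (\<Sum>l<length vs. if l = j then (vs ! l) i else 0)"
    by (rule sum.cong) auto
  then show "lincomb (\<lambda>l. if l = j then 1 else 0) vs i = (vs ! j) i"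
    using \<open>j < length vs\<close> by (simp add: lincomb_def sum.delta)
qed

lemma lincomb_in_span: "lincomb c vs \<in> lspan vs"
  by (auto simp: lspan_def)

lemma basis_elem:
  assumes "vs \<in> bases_of V" "x \<in> set vs"
  shows "x \<in> V"
proof -
  obtain j where j: "j < length vs" "x = vs ! j" using assms(2) by (auto simp: in_set_conv_nth)
  have "x = lincomb (\<lambda>l. if l = j then 1 else 0) vs" using lincomb_unit[OF j(1)] j(2) by simp
  then have "x \<in> lspan vs" by (simp add: lincomb_in_span)
  then show ?thesis using assms(1) by (simp add: bases_of_def)
qed

lemma lincomb_vecs:
  assumes "set vs \<subseteq> vecs n"
  shows "lincomb c vs \<in> vecs n"
  unfolding vecs_def
proof (intro CollectI allI impI)
  fix i assume i: "2*n \<le> i"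
  have "(vs ! x) i = 0" if "x < length vs" for x
  proof -
    have "vs ! x \<in> vecs n" using assms that nth_mem by blast
    then show ?thesis using i by (simp add: vecs_def)
  qed
  then show "lincomb c vs i = 0" by (simp add: lincomb_def)
qed


lemma lin_indep_distinct:
  assumes "lin_indep vs"
  shows "distinct vs"
  unfolding distinct_conv_nth
proof (intro allI impI)
  fix i j assume i: "i < length vs" and j: "j < length vs" and ij: "i \<noteq> j"
  show "vs ! i \<noteq> vs ! j"
  proof
    assume e: "vs ! i = vs ! j"
    define c where "c l = (if l = i then 1 else 0) + (if l = j then 1 else (0::bit))" for l
    have "lincomb c vs = (\<lambda>x. (vs ! i) x + (vs ! j) x)"
    proof
      fix x
      have "lincomb c vs x = (\<Sum>l<length vs. (if l = i then (vs ! l) x else 0) + (if l = j then (vs ! l) x else 0))"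
        unfolding lincomb_def c_def by (rule sum.cong) (auto simp: distrib_right)
      also have "\<dots> = (vs ! i) x + (vs ! j) x"
        using i j by (simp add: sum.distrib sum.delta)
      finally show "lincomb c vs x = (vs ! i) x + (vs ! j) x" .
    qed
    also have "\<dots> = (\<lambda>_. 0)" using e by simp
    finally have "lincomb c vs = (\<lambda>_. 0)" .
    then have "c i = 0" using assms i unfolding lin_indep_def by simp
    then show False using ij by (simp add: c_def)
  qed
qed

lemma finite_bases: "finite V \<Longrightarrow> finite (bases_of V)"
  by (rule finite_subset[OF _ finite_subset_distinct[of V]])
     (auto simp: bases_of_def lin_indep_distinct basis_elem)

lemma bases_li: "vs \<in> bases_of V \<Longrightarrow> lincomb c vs = (\<lambda>_. 0) \<Longrightarrow> j < length vs \<Longrightarrow> c j = 0"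
  unfolding bases_of_def lin_indep_def by simp

lemma bases_transport1:
  assumes g: "good_map n g" and V: "V \<subseteq> vecs n" and vs: "vs \<in> bases_of V"
  shows "map g vs \<in> bases_of (g ` V)"
proof -
  have lin: "lin_map g" using g by (simp add: good_map_def)
  note inj = good_inj[OF g]
  have g0: "g (\<lambda>_. 0) = (\<lambda>_. 0)" by (rule lin_map_zero[OF lin])
  have sv: "set vs \<subseteq> vecs n" using basis_elem[OF vs] V by blast
  have lc: "g (lincomb c vs) = lincomb c (map g vs)" for c by (rule lin_map_lincomb[OF lin])
  have "lin_indep (map g vs)"
    unfolding lin_indep_def
  proof (intro allI impI)
    fix c j assume h: "lincomb c (map g vs) = (\<lambda>_. 0)" and j: "j < length (map g vs)"
    have "g (lincomb c vs) = g (\<lambda>_. 0)" using h g0 lc[of c] by simp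
    then have "lincomb c vs = (\<lambda>_. 0)"
      by (rule inj_onD[OF inj _ lincomb_vecs[OF sv] vecs_zero])
    then show "c j = 0" using bases_li[OF vs] j by simp
  qed
  moreover have "lspan (map g vs) = g ` V"
  proof -
    have "lspan vs = V" using vs by (simp add: bases_of_def)
    then have "g ` V = {g (lincomb c vs) | c. True}" by (auto simp: lspan_def)
    also have "\<dots> = lspan (map g vs)" by (simp add: lc lspan_def)
    finally show ?thesis by simp
  qed
  ultimately show ?thesis by (simp add: bases_of_def)
qed

lemma bases_transport2:
  assumes g: "good_map n g" and V: "V \<subseteq> vecs n" and ws: "ws \<in> bases_of (g ` V)"
  shows "ws \<in> map g ` bases_of V"
proof -
  have lin: "lin_map g" using g by (simp add: good_map_def)
  note inj = good_inj[OF g]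
  have g0: "g (\<lambda>_. 0) = (\<lambda>_. 0)" by (rule lin_map_zero[OF lin])
  have sw: "set ws \<subseteq> g ` V" using basis_elem[OF ws] by blast
  define vs where "vs = map (inv_into V g) ws"
  have mv: "map g vs = ws"
  proof -
    have "\<forall>x\<in>set ws. g (inv_into V g x) = x" using sw by (auto simp: f_inv_into_f)
    then show ?thesis unfolding vs_def by (simp add: map_idI)
  qed
  have sv: "set vs \<subseteq> V" unfolding vs_def using sw by (auto intro: inv_into_into)
  then have sv': "set vs \<subseteq> vecs n" using V by blast
  have lc: "g (lincomb c vs) = lincomb c ws" for c
    using lin_map_lincomb[OF lin, of c vs] mv by simp
  have spw: "lspan ws = g ` V" using ws by (simp add: bases_of_def)
  have "lin_indep vs"
    unfolding lin_indep_def
  proof (intro allI impI)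
    fix c j assume h: "lincomb c vs = (\<lambda>_. 0)" and j: "j < length vs"
    have "lincomb c ws = (\<lambda>_. 0)" using lc[of c] h g0 by simp
    moreover have "j < length ws" using j mv by auto
    ultimately show "c j = 0" using bases_li[OF ws] by simp
  qed
  moreover have "lspan vs = V"
  proof
    show "lspan vs \<subseteq> V"
    proof
      fix x assume "x \<in> lspan vs"
      then obtain c where x: "x = lincomb c vs" by (auto simp: lspan_def)
      have "g x \<in> lspan ws" using lc[of c] x by (simp add: lincomb_in_span)
      then have "g x \<in> g ` V" using spw by simp
      then obtain v where v: "v \<in> V" "g x = g v" by auto
      have xv: "x \<in> vecs n" using x lincomb_vecs[OF sv'] by simp
      have "v \<in> vecs n" using v(1) V by blast
      then have "x = v" by (rule inj_onD[OF inj v(2) xv])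
      then show "x \<in> V" using v by simp
    qed
  next
    show "V \<subseteq> lspan vs"
    proof
      fix v assume v: "v \<in> V"
      then have "g v \<in> lspan ws" using spw by simp
      then obtain c where "g v = lincomb c ws" by (auto simp: lspan_def)
      then have e: "g v = g (lincomb c vs)" using lc by simp
      have "v \<in> vecs n" using v V by blast
      then have "v = lincomb c vs" by (rule inj_onD[OF inj e _ lincomb_vecs[OF sv']])
      then show "v \<in> lspan vs" by (simp add: lincomb_in_span)
    qed
  qed
  ultimately have "vs \<in> bases_of V" by (simp add: bases_of_def)
  then show ?thesis using mv by force
qed

lemma bases_transport:
  assumes g: "good_map n g" and V: "V \<subseteq> vecs n"
  shows "bases_of (g ` V) = map g ` bases_of V"
  using bases_transport1[OF g V] bases_transport2[OF g V] by blast

lemma iso_sub_vecs: "V \<in> iso_subspaces n d \<Longrightarrow> V \<subseteq> vecs n"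
  by (simp add: iso_subspaces_def subspace_dim_def)

lemma iso_transport:
  assumes g: "good_map n g" and V: "V \<in> iso_subspaces n d"
  shows "g ` V \<in> iso_subspaces n d"
proof -
  have Vv: "V \<subseteq> vecs n" by (rule iso_sub_vecs[OF V])
  obtain vs where vs: "length vs = d" "vs \<in> bases_of V"
    using V by (auto simp: iso_subspaces_def subspace_dim_def)
  have "map g vs \<in> bases_of (g ` V)" using bases_transport[OF g Vv] vs by blast
  moreover have "g ` V \<subseteq> vecs n" using g Vv by (auto simp: good_map_def)
  moreover have "isotropic n (g ` V)"
    using V g Vv by (auto simp: iso_subspaces_def isotropic_def good_map_def subset_iff)
  ultimately show ?thesis using vs by (auto simp: iso_subspaces_def subspace_dim_def intro!: exI[of _ "map g vs"])
qed

definition Sy :: "nat \<Rightarrow> (nat \<Rightarrow> bit) \<Rightarrow> (nat \<Rightarrow> bit) set set" where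
  "Sy n y = {V \<in> iso_subspaces n (n - 1). \<forall>v\<in>V. symp n v y = 0}"

lemma Sy_transport:
  assumes g: "good_map n g" and y: "y \<in> vecs n"
  shows "(\<lambda>V. g ` V) ` Sy n y = Sy n (g y)"
proof
  show "(\<lambda>V. g ` V) ` Sy n y \<subseteq> Sy n (g y)"
  proof
    fix W assume "W \<in> (\<lambda>V. g ` V) ` Sy n y"
    then obtain V where V: "V \<in> Sy n y" and W: "W = g ` V" by blast
    have Vi: "V \<in> iso_subspaces n (n - 1)" using V by (simp add: Sy_def)
    have Vv: "V \<subseteq> vecs n" by (rule iso_sub_vecs[OF Vi])
    have "W \<in> iso_subspaces n (n - 1)" unfolding W by (rule iso_transport[OF g Vi])
    moreover have "\<forall>w\<in>W. symp n w (g y) = 0"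
    proof
      fix w assume "w \<in> W"
      then obtain v where v: "v \<in> V" "w = g v" using W by blast
      have "symp n (g v) (g y) = symp n v y"
        using g Vv v(1) y by (auto simp: good_map_def)
      also have "\<dots> = 0" using V v(1) by (simp add: Sy_def)
      finally show "symp n w (g y) = 0" using v by simp
    qed
    ultimately show "W \<in> Sy n (g y)" by (simp add: Sy_def)
  qed
next
  show "Sy n (g y) \<subseteq> (\<lambda>V. g ` V) ` Sy n y"
  proof
    fix W assume W: "W \<in> Sy n (g y)"
    have Wi: "W \<in> iso_subspaces n (n - 1)" using W by (simp add: Sy_def)
    have Wv: "W \<subseteq> vecs n" by (rule iso_sub_vecs[OF Wi])
    define V where "V = {v \<in> vecs n. g v \<in> W}"
    have Vv: "V \<subseteq> vecs n" by (auto simp: V_def)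
    have gV: "g ` V = W"
    proof
      show "g ` V \<subseteq> W" by (auto simp: V_def)
    next
      show "W \<subseteq> g ` V"
      proof
        fix w assume w: "w \<in> W"
        then have "w \<in> g ` vecs n" using Wv good_surj[OF g] by blast
        then obtain v where "v \<in> vecs n" "w = g v" by blast
        then show "w \<in> g ` V" using w by (auto simp: V_def)
      qed
    qed
    obtain ws where ws: "length ws = n - 1" "ws \<in> bases_of W"
      using Wi by (auto simp: iso_subspaces_def subspace_dim_def)
    then obtain vs where vs: "vs \<in> bases_of V" "ws = map g vs"
      using bases_transport[OF g Vv] gV by auto
    have sy: "\<And>x z. x \<in> vecs n \<Longrightarrow> z \<in> vecs n \<Longrightarrow> symp n (g x) (g z) = symp n x z"
      using g by (simp add: good_map_def)
    have "isotropic n V"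
      unfolding isotropic_def
    proof (intro ballI)
      fix v w assume v: "v \<in> V" and w: "w \<in> V"
      have vv: "v \<in> vecs n" "g v \<in> W" using v by (auto simp: V_def)
      have ww: "w \<in> vecs n" "g w \<in> W" using w by (auto simp: V_def)
      have "symp n (g v) (g w) = 0" using Wi vv(2) ww(2) by (simp add: iso_subspaces_def isotropic_def)
      then show "symp n v w = 0" using sy[OF vv(1) ww(1)] by simp
    qed
    then have "V \<in> iso_subspaces n (n - 1)"
      using Vv vs ws by (auto simp: iso_subspaces_def subspace_dim_def)
    moreover have "\<forall>v\<in>V. symp n v y = 0"
      using W y sy by (auto simp: V_def Sy_def)
    ultimately have "V \<in> Sy n y" by (simp add: Sy_def)
    then show "W \<in> (\<lambda>V. g ` V) ` Sy n y" using gV by blast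
  qed
qed

lemma inj_image_Sy:
  assumes g: "good_map n g"
  shows "inj_on (\<lambda>V. g ` V) (Sy n y)"
proof (rule inj_onI)
  fix V V' assume V: "V \<in> Sy n y" and V': "V' \<in> Sy n y" and e: "g ` V = g ` V'"
  have "V \<subseteq> vecs n" "V' \<subseteq> vecs n" using V V' iso_sub_vecs by (auto simp: Sy_def)
  then show "V = V'" using inj_on_image_eq_iff[OF good_inj[OF g]] e by blast
qed

lemma finite_iso: "finite (iso_subspaces n d)"
  by (rule finite_subset[of _ "Pow (vecs n)"]) (auto simp: finite_vecs iso_subspaces_def subspace_dim_def)

lemma finite_Sy: "finite (Sy n y)"
  by (rule finite_subset[OF _ finite_iso]) (auto simp: Sy_def)

lemma card_Sy_transport:
  assumes g: "good_map n g" and y: "y \<in> vecs n"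
  shows "card (Sy n (g y)) = card (Sy n y)"
proof -
  have "card ((\<lambda>V. g ` V) ` Sy n y) = card (Sy n y)" by (rule card_image[OF inj_image_Sy[OF g]])
  then show ?thesis using Sy_transport[OF g y] by simp
qed

lemma lincomb_Cons: "lincomb c (w # ws) = (\<lambda>i. c 0 * w i + lincomb (\<lambda>l. c (Suc l)) ws i)"
  unfolding lincomb_def length_Cons sum.lessThan_Suc_shift by simp

lemma symp_lincomb_right: "symp n z (lincomb c vs) = (\<Sum>j<length vs. c j * symp n z (vs ! j))"
  unfolding lincomb_def by (rule symp_sum_right) simp

lemma symp_lincomb_left: "symp n (lincomb c vs) z = (\<Sum>j<length vs. c j * symp n (vs ! j) z)"
  unfolding lincomb_def by (rule symp_sum_left) simp

lemma sum_delta_bit: "i < (m::nat) \<Longrightarrow> (\<Sum>j<m. c j * (if i = j then 1 else (0::bit))) = c i"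
proof -
  assume i: "i < m"
  have "(\<Sum>j<m. c j * (if i = j then 1 else (0::bit))) = (\<Sum>j<m. if j = i then c j else 0)"
    by (rule sum.cong) auto
  also have "\<dots> = c i" using i by simp
  finally show ?thesis .
qed

lemma sum_delta_bit': "i < (m::nat) \<Longrightarrow> (\<Sum>j<m. c j * (if j = i then 1 else (0::bit))) = c i"
  using sum_delta_bit[of i m c] by (simp add: eq_commute[of i])

lemma lin_indep_tl:
  assumes "lin_indep (w # ws)"
  shows "lin_indep ws"
  unfolding lin_indep_def
proof (intro allI impI)
  fix c j assume h: "lincomb c ws = (\<lambda>_. 0)" and j: "j < length ws"
  define c' where "c' l = (if l = 0 then 0 else c (l - 1))" for l
  have "lincomb c' (w # ws) = (\<lambda>_. 0)"
    using h by (simp add: lincomb_Cons c'_def)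
  then have "c' (Suc j) = 0" using assms j unfolding lin_indep_def by simp
  then show "c j = 0" by (simp add: c'_def)
qed

lemma lincomb_vecs_set: "set vs \<subseteq> vecs n \<Longrightarrow> lincomb c vs \<in> vecs n"
  by (rule lincomb_vecs)

lemma exists_dual_vec:
  assumes "x \<in> vecs n" "x \<noteq> (\<lambda>_. 0)"
  shows "\<exists>u\<in>vecs n. symp n u x = 1"
proof (rule ccontr)
  assume "\<not> (\<exists>u\<in>vecs n. symp n u x = 1)"
  then have "\<And>j. j < 2*n \<Longrightarrow> symp n x (unitv j) = 0"
  proof -
    fix j assume "\<not> (\<exists>u\<in>vecs n. symp n u x = 1)" "j < 2*n"
    then have "symp n (unitv j) x \<noteq> 1" using unitv_vecs by blast
    then show "symp n x (unitv j) = 0" by (simp add: symp_comm)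
  qed
  then have "x = (\<lambda>_. 0)" by (rule nondegen[OF assms(1)])
  then show False using assms(2) by simp
qed

lemma dual_basis:
  assumes "set ws \<subseteq> vecs n" "lin_indep ws"
  shows "\<exists>rs. length rs = length ws \<and> set rs \<subseteq> vecs n \<and>
     (\<forall>i<length ws. \<forall>j<length ws. symp n (rs ! i) (ws ! j) = (if i = j then 1 else 0))"
  using assms
proof (induction ws)
  case Nil
  then show ?case by simp
next
  case (Cons w ws)
  have wv: "w \<in> vecs n" and wsv: "set ws \<subseteq> vecs n" using Cons.prems by auto
  have li: "lin_indep ws" by (rule lin_indep_tl[OF Cons.prems(2)])
  obtain rs where rs: "length rs = length ws" "set rs \<subseteq> vecs n"
    "\<And>i j. i < length ws \<Longrightarrow> j < length ws \<Longrightarrow> symp n (rs ! i) (ws ! j) = (if i = j then 1 else 0)"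
    using Cons.IH[OF wsv li] by auto
  define m where "m = length ws"
  define cc where "cc j = symp n (rs ! j) w" for j
  define w2 where "w2 = (\<lambda>i. w i + lincomb cc ws i)"
  have w2v: "w2 \<in> vecs n" unfolding w2_def by (rule vecs_add[OF wv lincomb_vecs[OF wsv]])
  have rw2: "symp n (rs ! i) w2 = 0" if "i < m" for i
  proof -
    have "symp n (rs ! i) w2 = cc i + (\<Sum>j<m. cc j * symp n (rs ! i) (ws ! j))"
      unfolding w2_def by (simp add: symp_add_right symp_lincomb_right cc_def m_def)
    also have "(\<Sum>j<m. cc j * symp n (rs ! i) (ws ! j)) = (\<Sum>j<m. cc j * (if i = j then 1 else 0))"
      using rs(3) that by (auto simp: m_def intro!: sum.cong)
    also have "\<dots> = cc i" using that by (rule sum_delta_bit)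
    finally show ?thesis by simp
  qed
  have w2nz: "w2 \<noteq> (\<lambda>_. 0)"
  proof
    assume h: "w2 = (\<lambda>_. 0)"
    define c0 where "c0 l = (if l = 0 then 1 else cc (l - 1))" for l
    have "lincomb c0 (w # ws) = w2"
      unfolding w2_def by (simp add: lincomb_Cons c0_def)
    then have "c0 0 = 0" using Cons.prems(2) h unfolding lin_indep_def by simp
    then show False by (simp add: c0_def)
  qed
  obtain u where u: "u \<in> vecs n" "symp n u w2 = 1" using exists_dual_vec[OF w2v w2nz] by blast
  define d where "d l = symp n u (ws ! l)" for l
  define r where "r = (\<lambda>i. u i + lincomb d rs i)"
  have rv: "r \<in> vecs n" unfolding r_def by (rule vecs_add[OF u(1) lincomb_vecs[OF rs(2)]])
  have rws: "symp n r (ws ! j) = 0" if "j < m" for j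
  proof -
    have "symp n r (ws ! j) = d j + (\<Sum>l<m. d l * symp n (rs ! l) (ws ! j))"
      unfolding r_def by (simp add: symp_add_left symp_lincomb_left d_def m_def rs(1))
    also have "(\<Sum>l<m. d l * symp n (rs ! l) (ws ! j)) = (\<Sum>l<m. d l * (if l = j then 1 else 0))"
      using rs(3) that by (auto simp: m_def intro!: sum.cong)
    also have "\<dots> = d j" using that by (rule sum_delta_bit')
    finally show ?thesis by simp
  qed
  have rw2': "symp n r w2 = 1"
  proof -
    have "symp n r w2 = symp n u w2 + (\<Sum>l<m. d l * symp n (rs ! l) w2)"
      unfolding r_def by (simp add: symp_add_left symp_lincomb_left m_def rs(1))
    also have "(\<Sum>l<m. d l * symp n (rs ! l) w2) = 0"
      using rw2 by simp
    finally show ?thesis using u(2) by simp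
  qed
  have rw: "symp n r w = 1"
  proof -
    have "symp n r w2 = symp n r w + (\<Sum>j<m. cc j * symp n r (ws ! j))"
      unfolding w2_def by (simp add: symp_add_right symp_lincomb_right m_def)
    also have "(\<Sum>j<m. cc j * symp n r (ws ! j)) = 0" using rws by simp
    finally show ?thesis using rw2' by simp
  qed
  define rs' where "rs' = r # map (\<lambda>q. (\<lambda>i. q i + symp n q w * r i)) rs"
  have "length rs' = length (w # ws)" by (simp add: rs'_def rs(1))
  moreover have "set rs' \<subseteq> vecs n"
  proof -
    have "(\<lambda>i. q i + symp n q w * r i) \<in> vecs n" if "q \<in> vecs n" for q
      using that rv by (auto simp: vecs_def)
    then show ?thesis using rs(2) rv by (auto simp: rs'_def)
  qed
  moreover have "\<forall>i<length (w # ws). \<forall>j<length (w # ws).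
      symp n (rs' ! i) ((w # ws) ! j) = (if i = j then 1 else 0)"
  proof (intro allI impI)
    fix i j assume i: "i < length (w # ws)" and j: "j < length (w # ws)"
    show "symp n (rs' ! i) ((w # ws) ! j) = (if i = j then 1 else 0)"
    proof (cases i)
      case 0
      then show ?thesis
      proof (cases j)
        case 0
        then show ?thesis using \<open>i = 0\<close> rw by (simp add: rs'_def)
      next
        case (Suc j')
        then have "j' < m" using j by (simp add: m_def)
        then show ?thesis using \<open>i = 0\<close> Suc rws by (simp add: rs'_def)
      qed
    next
      case (Suc i')
      have i': "i' < m" using i Suc by (simp add: m_def)
      have e: "rs' ! i = (\<lambda>x. (rs ! i') x + symp n (rs ! i') w * r x)"
        using Suc i' rs(1) by (simp add: rs'_def m_def)
      show ?thesis
      proof (cases j)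
        case 0
        have "symp n (rs' ! i) w = symp n (rs ! i') w + symp n (rs ! i') w * symp n r w"
          unfolding e by (simp add: symp_add_left symp_scale_left)
        then show ?thesis using 0 Suc rw by simp
      next
        case (Suc j')
        have j': "j' < m" using j Suc by (simp add: m_def)
        have "symp n (rs' ! i) (ws ! j') = symp n (rs ! i') (ws ! j') + symp n (rs ! i') w * symp n r (ws ! j')"
          unfolding e by (simp add: symp_add_left symp_scale_left)
        then show ?thesis using \<open>i = Suc i'\<close> Suc rws[OF j'] rs(3)[OF i'[unfolded m_def] j'[unfolded m_def]] by simp
      qed
    qed
  qed
  ultimately show ?case by (intro exI[of _ rs'] conjI)
qed

definition perp :: "nat \<Rightarrow> (nat \<Rightarrow> bit) set \<Rightarrow> (nat \<Rightarrow> bit) set" where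
  "perp n W = {r \<in> vecs n. \<forall>w\<in>W. symp n r w = 0}"

lemma card_kernel:
  assumes "set ws \<subseteq> vecs n" "lin_indep ws"
  shows "2 ^ (2*n) = 2 ^ length ws * card {r \<in> vecs n. \<forall>j<length ws. symp n r (ws ! j) = 0}"
proof -
  define m where "m = length ws"
  define K where "K = {r \<in> vecs n. \<forall>j<m. symp n r (ws ! j) = 0}"
  obtain rs where rs: "length rs = m" "set rs \<subseteq> vecs n"
    "\<And>i j. i < m \<Longrightarrow> j < m \<Longrightarrow> symp n (rs ! i) (ws ! j) = (if i = j then 1 else 0)"
    using dual_basis[OF assms] unfolding m_def by auto
  define phi where "phi r = (\<lambda>j. if j < m then symp n r (ws ! j) else 0)" for r
  define T where "T = supp {..<m}"
  define fib where "fib y = {r \<in> vecs n. phi r = y}" for y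
  define rho where "rho y = lincomb y rs" for y
  have rhov: "rho y \<in> vecs n" for y unfolding rho_def by (rule lincomb_vecs[OF rs(2)])
  have phirho: "symp n (rho y) (ws ! j) = y j" if "j < m" for y j
  proof -
    have "symp n (rho y) (ws ! j) = (\<Sum>l<m. y l * (if l = j then 1 else 0))"
      unfolding rho_def symp_lincomb_left rs(1) using rs(3) that by (auto intro!: sum.cong)
    also have "\<dots> = y j" using that by (rule sum_delta_bit')
    finally show ?thesis .
  qed
  have fibK: "card (fib y) = card K" if y: "y \<in> T" for y
  proof -
    have yhi: "y j = 0" if "\<not> j < m" for j using y that by (simp add: T_def supp_def)
    have "bij_betw (\<lambda>r. (\<lambda>i. r i + rho y i)) K (fib y)"
    proof (rule bij_betw_byWitness[where f'="\<lambda>r. (\<lambda>i. r i + rho y i)"])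
      show "\<forall>a\<in>K. (\<lambda>i. (a i + rho y i) + rho y i) = a" by (simp add: add.assoc)
      show "\<forall>a\<in>fib y. (\<lambda>i. (a i + rho y i) + rho y i) = a" by (simp add: add.assoc)
      show "(\<lambda>r. (\<lambda>i. r i + rho y i)) ` K \<subseteq> fib y"
      proof
        fix x assume "x \<in> (\<lambda>r. (\<lambda>i. r i + rho y i)) ` K"
        then obtain r where r: "r \<in> K" "x = (\<lambda>i. r i + rho y i)" by blast
        have "x \<in> vecs n" using r rhov vecs_add K_def by auto
        moreover have "phi x = y"
        proof
          fix j show "phi x j = y j"
            using r phirho yhi by (auto simp: phi_def K_def symp_add_left)
        qed
        ultimately show "x \<in> fib y" by (simp add: fib_def)
      qed
      show "(\<lambda>r. (\<lambda>i. r i + rho y i)) ` fib y \<subseteq> K"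
      proof
        fix x assume "x \<in> (\<lambda>r. (\<lambda>i. r i + rho y i)) ` fib y"
        then obtain r where r: "r \<in> fib y" "x = (\<lambda>i. r i + rho y i)" by blast
        have rv: "r \<in> vecs n" and pr: "phi r = y" using r by (auto simp: fib_def)
        have "x \<in> vecs n" using r rv rhov vecs_add by auto
        moreover have "symp n x (ws ! j) = 0" if "j < m" for j
        proof -
          have "phi r j = y j" using pr by simp
          then have "symp n r (ws ! j) = y j" using that by (simp add: phi_def)
          then show ?thesis using r(2) phirho[OF that] by (simp add: symp_add_left)
        qed
        ultimately show "x \<in> K" by (simp add: K_def)
      qed
    qed
    then show ?thesis by (metis bij_betw_same_card)
  qed
  have vecsU: "vecs n = (\<Union>y\<in>T. fib y)"
    by (auto simp: fib_def T_def supp_def phi_def)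
  have finT: "finite T" by (simp add: T_def finite_supp)
  have "card (vecs n) = (\<Sum>y\<in>T. card (fib y))"
    unfolding vecsU
    by (rule card_UN_disjoint[OF finT]) (auto simp: fib_def intro: finite_subset[OF _ finite_vecs])
  also have "\<dots> = (\<Sum>y\<in>T. card K)" using fibK by simp
  also have "\<dots> = 2 ^ m * card K" by (simp add: T_def card_supp)
  finally show ?thesis by (simp add: card_vecs K_def m_def)
qed

lemma perp_basis:
  assumes "ws \<in> bases_of W"
  shows "perp n W = {r \<in> vecs n. \<forall>j<length ws. symp n r (ws ! j) = 0}"
proof
  show "perp n W \<subseteq> {r \<in> vecs n. \<forall>j<length ws. symp n r (ws ! j) = 0}"
  proof
    fix r assume r: "r \<in> perp n W"
    have "symp n r (ws ! j) = 0" if "j < length ws" for j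
    proof -
      have "ws ! j \<in> W" using basis_elem[OF assms] nth_mem[OF that] by blast
      then show ?thesis using r by (simp add: perp_def)
    qed
    then show "r \<in> {r \<in> vecs n. \<forall>j<length ws. symp n r (ws ! j) = 0}" using r by (simp add: perp_def)
  qed
next
  show "{r \<in> vecs n. \<forall>j<length ws. symp n r (ws ! j) = 0} \<subseteq> perp n W"
  proof
    fix r assume r: "r \<in> {r \<in> vecs n. \<forall>j<length ws. symp n r (ws ! j) = 0}"
    have "symp n r w = 0" if "w \<in> W" for w
    proof -
      have "w \<in> lspan ws" using that assms by (simp add: bases_of_def)
      then obtain c where "w = lincomb c ws" by (auto simp: lspan_def)
      then show ?thesis using r by (simp add: symp_lincomb_right)
    qed
    then show "r \<in> perp n W" using r by (simp add: perp_def)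
  qed
qed

lemma card_perp:
  assumes "W \<in> iso_subspaces n d"
  shows "2 ^ (2*n) = 2 ^ d * card (perp n W)"
proof -
  obtain ws where ws: "length ws = d" "ws \<in> bases_of W"
    using assms by (auto simp: iso_subspaces_def subspace_dim_def)
  have "set ws \<subseteq> vecs n" using basis_elem[OF ws(2)] iso_sub_vecs[OF assms] by blast
  moreover have "lin_indep ws" using ws(2) by (simp add: bases_of_def)
  ultimately have "2 ^ (2*n) = 2 ^ length ws * card {r \<in> vecs n. \<forall>j<length ws. symp n r (ws ! j) = 0}"
    by (rule card_kernel)
  then show ?thesis using perp_basis[OF ws(2), of n] ws(1) by simp
qed

lemma prob_bind_set:
  assumes "finite X" "X \<noteq> {}"
  shows "measure_pmf.prob (bind_pmf (pmf_of_set X) K) A = (\<Sum>x\<in>X. measure_pmf.prob (K x) A) / card X"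
proof -
  have cp: "card X > 0" using assms by (simp add: card_gt_0_iff)
  have "ennreal (measure_pmf.prob (bind_pmf (pmf_of_set X) K) A) = emeasure (bind_pmf (pmf_of_set X) K) A"
    by (simp add: measure_pmf.emeasure_eq_measure)
  also have "\<dots> = (\<integral>\<^sup>+x. emeasure (K x) A \<partial>pmf_of_set X)" by simp
  also have "\<dots> = (\<Sum>x\<in>X. emeasure (K x) A) / card X"
    by (rule nn_integral_pmf_of_set[OF assms(2,1)])
  also have "\<dots> = (\<Sum>x\<in>X. ennreal (measure_pmf.prob (K x) A)) / ennreal (real (card X))"
    by (simp add: measure_pmf.emeasure_eq_measure ennreal_of_nat_eq_real_of_nat)
  also have "\<dots> = ennreal (\<Sum>x\<in>X. measure_pmf.prob (K x) A) / ennreal (real (card X))"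
    by (simp add: sum_ennreal)
  also have "\<dots> = ennreal ((\<Sum>x\<in>X. measure_pmf.prob (K x) A) / card X)"
    using cp by (simp add: divide_ennreal sum_nonneg)
  finally show ?thesis
    by (subst (asm) ennreal_inj) (auto intro!: sum_nonneg divide_nonneg_nonneg)
qed

definition Kb :: "(nat \<Rightarrow> bit) set \<Rightarrow> (nat \<Rightarrow> bit) list pmf" where
  "Kb V = pmf_of_set (bases_of V)"

definition Bd :: "(nat \<Rightarrow> bit) set set \<Rightarrow> (nat \<Rightarrow> bit) list pmf" where
  "Bd X = bind_pmf (pmf_of_set X) Kb"

lemma bases_nonempty: "V \<in> iso_subspaces n d \<Longrightarrow> bases_of V \<noteq> {}"
  by (auto simp: iso_subspaces_def subspace_dim_def)

lemma finite_iso_elem: "V \<in> iso_subspaces n d \<Longrightarrow> finite V"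
  by (rule finite_subset[OF iso_sub_vecs finite_vecs])

lemma finite_bases_iso: "V \<in> iso_subspaces n d \<Longrightarrow> finite (bases_of V)"
  by (rule finite_bases[OF finite_iso_elem])

lemma Kb_transport:
  assumes g: "good_map n g" and V: "V \<in> iso_subspaces n d"
  shows "map_pmf (map g) (Kb V) = Kb (g ` V)"
proof -
  have Vv: "V \<subseteq> vecs n" by (rule iso_sub_vecs[OF V])
  have inj: "inj_on (map g) (bases_of V)"
  proof (rule inj_on_mapI)
    have "\<Union> (set ` bases_of V) \<subseteq> vecs n"
    proof
      fix x assume "x \<in> \<Union> (set ` bases_of V)"
      then obtain vs where "vs \<in> bases_of V" "x \<in> set vs" by blast
      then have "x \<in> V" by (rule basis_elem)
      then show "x \<in> vecs n" using Vv by blast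
    qed
    then show "inj_on g (\<Union> (set ` bases_of V))" by (rule inj_on_subset[OF good_inj[OF g]])
  qed
  have "map_pmf (map g) (Kb V) = pmf_of_set (map g ` bases_of V)"
    unfolding Kb_def by (rule map_pmf_of_set_inj[OF inj bases_nonempty[OF V] finite_bases_iso[OF V]])
  also have "\<dots> = Kb (g ` V)" by (simp add: Kb_def bases_transport[OF g Vv])
  finally show ?thesis .
qed

lemma Bd_transport:
  assumes g: "good_map n g" and y: "y \<in> vecs n" and ne: "Sy n y \<noteq> {}"
  shows "map_pmf (map g) (Bd (Sy n y)) = Bd (Sy n (g y))"
proof -
  have "map_pmf (map g) (Bd (Sy n y)) = bind_pmf (pmf_of_set (Sy n y)) (\<lambda>V. map_pmf (map g) (Kb V))"
    by (simp add: Bd_def map_bind_pmf)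
  also have "\<dots> = bind_pmf (pmf_of_set (Sy n y)) (\<lambda>V. Kb (g ` V))"
    by (rule bind_pmf_cong) (use ne finite_Sy Kb_transport[OF g] in \<open>auto simp: Sy_def\<close>)
  also have "\<dots> = bind_pmf (map_pmf (\<lambda>V. g ` V) (pmf_of_set (Sy n y))) Kb"
    by (simp add: bind_map_pmf)
  also have "map_pmf (\<lambda>V. g ` V) (pmf_of_set (Sy n y)) = pmf_of_set (Sy n (g y))"
    using map_pmf_of_set_inj[OF inj_image_Sy[OF g] ne finite_Sy] Sy_transport[OF g y] by simp
  finally show ?thesis by (simp add: Bd_def)
qed

lemma lincomb_units:
  "lincomb c (map unitv [Suc 0..<n]) i = (if 1 \<le> i \<and> i < n then c (i - 1) else 0)"
proof -
  have "lincomb c (map unitv [Suc 0..<n]) i = (\<Sum>j<n - 1. c j * (if i = Suc j then 1 else 0))"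
    unfolding lincomb_def by (rule sum.cong) (auto simp: unitv_def)
  also have "\<dots> = (\<Sum>j<n - 1. if j = i - 1 then (if 1 \<le> i then c j else 0) else 0)"
    by (rule sum.cong) auto
  also have "\<dots> = (if 1 \<le> i \<and> i < n then c (i - 1) else 0)"
    by (auto simp: sum.delta)
  finally show ?thesis .
qed

definition W0 :: "nat \<Rightarrow> (nat \<Rightarrow> bit) set" where
  "W0 n = lspan (map unitv [Suc 0..<n])"

lemma W0_Sy:
  assumes "n \<ge> 2"
  shows "W0 n \<in> Sy n (fvec n 1)"
proof -
  define ws where "ws = map unitv [Suc 0..<n]"
  have li: "lin_indep ws"
    unfolding lin_indep_def
  proof (intro allI impI)
    fix c j assume h: "lincomb c ws = (\<lambda>_. 0)" and j: "j < length ws"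
    have "lincomb c ws (Suc j) = c j" using j by (simp add: ws_def lincomb_units)
    then show "c j = 0" using h by simp
  qed
  have sup: "x \<in> W0 n \<Longrightarrow> i \<ge> n \<or> i = 0 \<Longrightarrow> x i = 0" for x i
    by (auto simp: W0_def lspan_def lincomb_units)
  have vec: "W0 n \<subseteq> vecs n" using sup by (auto simp: vecs_def)
  have iso: "isotropic n (W0 n)"
    unfolding isotropic_def symp_def
  proof (intro ballI sum.neutral)
    fix v w i assume v: "v \<in> W0 n" and w: "w \<in> W0 n" and "i \<in> {..<n}"
    have "v (n + i) = 0" "w (n + i) = 0" using sup[OF v] sup[OF w] by auto
    then show "v i * w (n + i) + v (n + i) * w i = 0" by simp
  qed
  have orth: "\<forall>v\<in>W0 n. symp n v (fvec n 1) = 0"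
    using sup assms by (auto simp: fvec_def symp_unit_right)
  have "length ws = n - 1" "ws \<in> bases_of (W0 n)"
    using li by (auto simp: ws_def bases_of_def W0_def)
  then have "subspace_dim n (n - 1) (W0 n)" using vec by (auto simp: subspace_dim_def)
  then show ?thesis using iso orth by (simp add: Sy_def iso_subspaces_def)
qed

lemma fvec1_has_k: "n \<ge> 1 \<Longrightarrow> has_k n (fvec n 1)"
  by (auto simp: has_k_iff fvec_def unitv_def intro!: exI[of _ n])

lemma card_Sy_const:
  assumes n: "n \<ge> 2" and y: "y \<in> vecs n" "y \<noteq> (\<lambda>_. 0)"
  shows "card (Sy n y) = card (Sy n (fvec n 1))"
proof -
  have good: "card (Sy n z) = card (Sy n (fvec n 1))" if z: "z \<in> vecs n" "has_k n z" for z
  proof -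
    define r where "r = tau n z"
    have r: "r \<in> vecs n" "has_k n r" using tau_vecs[OF z(1) n] tau_has_k[OF z(2) n] by (auto simp: r_def)
    have "Cmap n r (fvec n 1) = z" using tau_tau[OF z(2) n] by (simp add: r_def tau_def)
    then show ?thesis
      using card_Sy_transport[OF Cmap_good[OF r(1) n] fvec1_vecs[of n]] n by simp
  qed
  show ?thesis
  proof (cases "has_k n y")
    case True
    then show ?thesis using good y by blast
  next
    case False
    have "Fm n y \<in> vecs n" using Fm_good y(1) by (auto simp: good_map_def)
    moreover have "has_k n (Fm n y)" by (rule Fm_has_k[OF y False])
    ultimately have "card (Sy n (Fm n y)) = card (Sy n (fvec n 1))" by (rule good)
    moreover have "card (Sy n (Fm n y)) = card (Sy n y)" by (rule card_Sy_transport[OF Fm_good y(1)])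
    ultimately show ?thesis by simp
  qed
qed

lemma Sy_nonempty:
  assumes n: "n \<ge> 2" and y: "y \<in> vecs n" "y \<noteq> (\<lambda>_. 0)"
  shows "Sy n y \<noteq> {}"
proof -
  have "Sy n (fvec n 1) \<noteq> {}" using W0_Sy[OF n] by blast
  then have "card (Sy n (fvec n 1)) > 0" using finite_Sy by (simp add: card_gt_0_iff)
  then have "card (Sy n y) > 0" using card_Sy_const[OF n y] by simp
  then show ?thesis by auto
qed

lemma fvec1_nz: "n \<ge> 1 \<Longrightarrow> fvec n 1 \<noteq> (\<lambda>_. 0)"
  by (auto simp: fvec_def unitv_def fun_eq_iff)

lemma tau_nz:
  assumes n: "n \<ge> 2" and r: "r \<in> vecs n"
  shows "tau n r \<in> vecs n" "tau n r \<noteq> (\<lambda>_. 0)"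
proof -
  show "tau n r \<in> vecs n" by (rule tau_vecs[OF r n])
  show "tau n r \<noteq> (\<lambda>_. 0)"
  proof (cases "has_k n r")
    case True
    then have "has_k n (tau n r)" by (rule tau_has_k[OF _ n])
    then show ?thesis by (auto simp: has_k_def)
  next
    case False
    then show ?thesis using fvec1_nz n by (simp add: tau_bad)
  qed
qed

lemma out_dist_eq:
  assumes n: "n \<ge> 2"
  shows "out_dist n = bind_pmf (pmf_of_set (vecs n)) (\<lambda>r. Bd (Sy n (tau n r)))"
proof -
  have S1: "{V \<in> iso_subspaces n (n - 1). \<forall>v\<in>V. symp n v (fvec n 1) = 0} = Sy n (fvec n 1)"
    by (simp add: Sy_def)
  have ne1: "Sy n (fvec n 1) \<noteq> {}" using W0_Sy[OF n] by blast
  have inner: "bind_pmf (pmf_of_set (Sy n (fvec n 1)))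
        (\<lambda>V. bind_pmf (pmf_of_set (bases_of V)) (\<lambda>vs. return_pmf (map (Cmap n r) vs)))
      = Bd (Sy n (tau n r))" if r: "r \<in> vecs n" for r
  proof -
    have "bind_pmf (pmf_of_set (Sy n (fvec n 1)))
        (\<lambda>V. bind_pmf (pmf_of_set (bases_of V)) (\<lambda>vs. return_pmf (map (Cmap n r) vs)))
        = map_pmf (map (Cmap n r)) (Bd (Sy n (fvec n 1)))"
      by (simp add: Bd_def Kb_def map_pmf_def bind_assoc_pmf)
    also have "\<dots> = Bd (Sy n (Cmap n r (fvec n 1)))"
      by (rule Bd_transport[OF Cmap_good[OF r n] fvec1_vecs ne1]) (use n in simp)
    finally show ?thesis by (simp add: tau_def)
  qed
  show ?thesis
    unfolding out_dist_def S1
  proof (rule bind_pmf_cong[OF refl])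
    fix r assume "r \<in> set_pmf (pmf_of_set (vecs n))"
    moreover have "vecs n \<noteq> {}" using vecs_zero by blast
    ultimately have "r \<in> vecs n" using set_pmf_of_set[OF _ finite_vecs] by blast
    then show "bind_pmf (pmf_of_set (Sy n (fvec n 1)))
        (\<lambda>V. bind_pmf (pmf_of_set (bases_of V)) (\<lambda>vs. return_pmf (map (Cmap n r) vs)))
      = Bd (Sy n (tau n r))" by (rule inner)
  qed
qed

lemma ideal_dist_eq: "ideal_dist n = Bd (iso_subspaces n (n - 1))"
proof -
  have "Kb = (\<lambda>W. pmf_of_set (bases_of W))" by (rule ext) (simp add: Kb_def)
  then show ?thesis by (simp add: ideal_dist_def Bd_def)
qed

lemma card_perp_val:
  assumes "W \<in> iso_subspaces n (n - 1)" "n \<ge> 1"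
  shows "card (perp n W) = 2 ^ (n + 1)"
proof -
  have e: "(2::nat) ^ (2*n) = 2 ^ (n - 1) * card (perp n W)" by (rule card_perp[OF assms(1)])
  have h: "2*n = (n - 1) + (n + 1)" using assms(2) by simp
  have "(2::nat) ^ (2*n) = 2 ^ (n - 1) * 2 ^ (n + 1)"
    by (subst h) (rule power_add)
  with e show ?thesis by simp
qed

lemma zero_perp: "(\<lambda>_. 0) \<in> perp n W"
  by (simp add: perp_def symp_comm[of n "\<lambda>_. 0"])

lemma finite_perp: "finite (perp n W)"
  by (rule finite_subset[OF _ finite_vecs]) (auto simp: perp_def)

lemma Sy_iff_perp:
  assumes "W \<in> iso_subspaces n (n - 1)" "y \<in> vecs n"
  shows "W \<in> Sy n y \<longleftrightarrow> y \<in> perp n W"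
  using assms by (auto simp: Sy_def perp_def symp_comm[of n y])

lemma swap_count:
  fixes f :: "(nat \<Rightarrow> bit) set \<Rightarrow> real"
  assumes n: "n \<ge> 1"
  shows "(\<Sum>y\<in>vecs n - {\<lambda>_. 0}. \<Sum>W\<in>Sy n y. f W)
       = (2 ^ (n + 1) - 1) * (\<Sum>W\<in>iso_subspaces n (n - 1). f W)"
proof -
  define S where "S = iso_subspaces n (n - 1)"
  define Y where "Y = vecs n - {\<lambda>_. 0}"
  have finY: "finite Y" by (simp add: Y_def finite_vecs)
  have finS: "finite S" by (simp add: S_def finite_iso)
  have "(\<Sum>y\<in>Y. \<Sum>W\<in>Sy n y. f W) = (\<Sum>y\<in>Y. \<Sum>W\<in>S. if W \<in> Sy n y then f W else 0)"
  proof (rule sum.cong[OF refl])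
    fix y assume "y \<in> Y"
    have "Sy n y = {W \<in> S. W \<in> Sy n y}" by (auto simp: Sy_def S_def)
    then show "(\<Sum>W\<in>Sy n y. f W) = (\<Sum>W\<in>S. if W \<in> Sy n y then f W else 0)"
      using sum.inter_filter[OF finS, of f "\<lambda>W. W \<in> Sy n y"] by simp
  qed
  also have "\<dots> = (\<Sum>W\<in>S. \<Sum>y\<in>Y. if W \<in> Sy n y then f W else 0)"
    by (rule sum.swap)
  also have "\<dots> = (\<Sum>W\<in>S. (2 ^ (n + 1) - 1) * f W)"
  proof (rule sum.cong[OF refl])
    fix W assume W: "W \<in> S"
    have "(\<Sum>y\<in>Y. if W \<in> Sy n y then f W else 0) = (\<Sum>y\<in>{y \<in> Y. W \<in> Sy n y}. f W)"
      using sum.inter_filter[OF finY, of "\<lambda>_. f W" "\<lambda>y. W \<in> Sy n y"] by simp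
    also have "{y \<in> Y. W \<in> Sy n y} = perp n W - {\<lambda>_. 0}"
      using Sy_iff_perp[of W n] W by (auto simp: S_def Y_def perp_def)
    also have "card (perp n W - {\<lambda>_. 0}) = 2 ^ (n + 1) - 1"
      using card_perp_val[of W n] W n zero_perp[of n W] finite_perp[of n W]
      by (simp add: S_def card_Diff_singleton)
    then have "(\<Sum>y\<in>perp n W - {\<lambda>_. 0}. f W) = (2 ^ (n + 1) - 1) * f W"
      by simp
    finally show "(\<Sum>y\<in>Y. if W \<in> Sy n y then f W else 0) = (2 ^ (n + 1) - 1) * f W" .
  qed
  also have "\<dots> = (2 ^ (n + 1) - 1) * (\<Sum>W\<in>S. f W)" by (simp add: sum_distrib_left)
  finally show ?thesis by (simp add: S_def Y_def)
qed

lemma final_ineq: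
  fixes a b c t :: real
  assumes t: "t \<ge> 2" and a: "0 \<le> a" "a \<le> t^2 - t" and b: "0 \<le> b" "b \<le> t"
    and c: "0 \<le> c" "c \<le> t - 1"
  shows "\<bar>(a + b) / t^2 - (a + c) / (t^2 - 1)\<bar> \<le> 1 / t"
proof -
  have tt: "t * t \<ge> 2 * 2" using mult_mono[OF t t] t by simp
  have t2: "t^2 - 1 > 0" using tt by (simp add: power2_eq_square)
  have t0: "t^2 > 0" using t by simp
  define D where "D = t^2 * (t^2 - 1)"
  have D: "D > 0" using t2 t0 by (simp add: D_def)
  define N where "N = b * (t^2 - 1) - a - c * t^2"
  have eq: "(a + b) / t^2 - (a + c) / (t^2 - 1) = N / D"
    using t2 t0 by (simp add: D_def N_def field_simps)
  have up1: "b * (t^2 - 1) \<le> t * (t^2 - 1)" using b(2) t2 by (simp add: mult_right_mono)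
  have up2: "0 \<le> c * t^2" using c(1) by simp
  have up: "N \<le> t * (t^2 - 1)" using up1 up2 a(1) by (simp add: N_def)
  have lo1: "c * t^2 \<le> (t - 1) * t^2" using c(2) by (simp add: mult_right_mono)
  have lo2: "0 \<le> b * (t^2 - 1)" using b(1) t2 by simp
  have lo3: "(t^2 - t) + (t - 1) * t^2 = t * (t^2 - 1)" by (simp add: power2_eq_square algebra_simps)
  have lo: "- (t * (t^2 - 1)) \<le> N" using lo1 lo2 lo3 a(2) by (simp add: N_def)
  have absN: "\<bar>N\<bar> \<le> t * (t^2 - 1)" using up lo by linarith
  have "\<bar>N / D\<bar> = \<bar>N\<bar> / D" using D by simp
  also have "\<dots> \<le> t * (t^2 - 1) / D" using absN D by (simp add: divide_right_mono)
  also have "\<dots> = 1 / t" using t2 t by (simp add: D_def power2_eq_square field_simps)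
  finally show ?thesis using eq by simp
qed

lemma neg_pow2: "negligible (\<lambda>n. 1 / 2 ^ n)"
  unfolding negligible_def
proof
  fix c :: nat
  have "eventually (\<lambda>n::nat. real n ^ c \<le> 2 ^ n) at_top" by real_asymp
  then obtain N where N: "\<And>n. n \<ge> N \<Longrightarrow> real n ^ c \<le> 2 ^ n"
    by (auto simp: eventually_at_top_linorder)
  show "\<exists>N. \<forall>n\<ge>N. \<bar>1 / 2 ^ n\<bar> \<le> 1 / real n ^ c"
  proof (intro exI allI impI)
    fix n assume n: "n \<ge> max N 1"
    have pos: "real n ^ c > 0" using n by simp
    have "1 / (2::real) ^ n \<le> 1 / real n ^ c"
      using N[of n] n pos by (simp add: frac_le)
    then show "\<bar>1 / 2 ^ n\<bar> \<le> 1 / real n ^ c" by simp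
  qed
qed

lemma Sy_sub: "Sy n y \<subseteq> iso_subspaces n (n - 1)"
  by (auto simp: Sy_def)

lemma g_formula:
  assumes n: "n \<ge> 2" and y: "y \<in> vecs n" "y \<noteq> (\<lambda>_. 0)"
  shows "measure_pmf.prob (Bd (Sy n y)) A
       = (\<Sum>W\<in>Sy n y. measure_pmf.prob (Kb W) A) / card (Sy n (fvec n 1))"
  using prob_bind_set[OF finite_Sy Sy_nonempty[OF n y], of Kb A] card_Sy_const[OF n y]
  by (simp add: Bd_def)

lemma card_Y: "card (vecs n - {\<lambda>_. 0}) = 2 ^ (2*n) - 1"
  by (simp add: card_Diff_singleton finite_vecs card_vecs)

lemma ideal_prob:
  assumes n: "n \<ge> 2"
  shows "measure_pmf.prob (ideal_dist n) A
       = (\<Sum>y\<in>vecs n - {\<lambda>_. 0}. measure_pmf.prob (Bd (Sy n y)) A) / (2 ^ (2*n) - 1)"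
proof -
  define S where "S = iso_subspaces n (n - 1)"
  define Y where "Y = vecs n - {\<lambda>_. 0}"
  define h where "h W = measure_pmf.prob (Kb W) A" for W
  define M where "M = real (card (Sy n (fvec n 1)))"
  define P1 where "P1 = (2::real) ^ (n + 1) - 1"
  have n1: "n \<ge> 1" using n by simp
  have Sne: "S \<noteq> {}" using W0_Sy[OF n] Sy_sub[of n "fvec n 1"] by (auto simp: S_def)
  have finS: "finite S" by (simp add: S_def finite_iso)
  have Npos: "real (card S) > 0" using Sne finS by (simp add: card_gt_0_iff)
  have Mpos: "M > 0"
    using W0_Sy[OF n] finite_Sy[of n "fvec n 1"] by (auto simp: M_def card_gt_0_iff)
  have P1pos: "P1 > 0"
  proof -
    have "(2::real) ^ (n + 1) \<ge> 2 ^ 1" by (rule power_increasing) auto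
    then have "(2::real) ^ (n + 1) \<ge> 2" by simp
    then show ?thesis unfolding P1_def by linarith
  qed
  have Ysub: "y \<in> vecs n" "y \<noteq> (\<lambda>_. 0)" if "y \<in> Y" for y using that by (auto simp: Y_def)
  have ideal: "measure_pmf.prob (ideal_dist n) A = (\<Sum>W\<in>S. h W) / card S"
    unfolding ideal_dist_eq Bd_def S_def h_def
    by (rule prob_bind_set[OF finS[unfolded S_def] Sne[unfolded S_def]])
  have gsum: "(\<Sum>y\<in>Y. measure_pmf.prob (Bd (Sy n y)) A) = (\<Sum>y\<in>Y. (\<Sum>W\<in>Sy n y. h W) / M)"
    by (rule sum.cong[OF refl]) (simp add: g_formula[OF n Ysub] h_def M_def)
  also have "\<dots> = (\<Sum>y\<in>Y. \<Sum>W\<in>Sy n y. h W) / M" by (simp add: sum_divide_distrib)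
  also have "(\<Sum>y\<in>Y. \<Sum>W\<in>Sy n y. h W) = P1 * (\<Sum>W\<in>S. h W)"
    unfolding Y_def S_def P1_def by (rule swap_count[OF n1])
  finally have g1: "(\<Sum>y\<in>Y. measure_pmf.prob (Bd (Sy n y)) A) = P1 * (\<Sum>W\<in>S. h W) / M" .
  have cnt: "(\<Sum>y\<in>Y. \<Sum>W\<in>Sy n y. (1::real)) = P1 * (\<Sum>W\<in>S. (1::real))"
    unfolding Y_def S_def P1_def by (rule swap_count[OF n1])
  have "(\<Sum>y\<in>Y. \<Sum>W\<in>Sy n y. (1::real)) = (\<Sum>y\<in>Y. M)"
    by (rule sum.cong[OF refl]) (simp add: M_def card_Sy_const[OF n Ysub])
  also have "\<dots> = (2 ^ (2*n) - 1) * M"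
    using card_Y[of n] by (simp add: Y_def)
  finally have cnt2: "(2 ^ (2*n) - 1) * M = P1 * card S" using cnt by simp
  have "(\<Sum>y\<in>Y. measure_pmf.prob (Bd (Sy n y)) A) / (2 ^ (2*n) - 1)
      = P1 * (\<Sum>W\<in>S. h W) / (M * (2 ^ (2*n) - 1))" using g1 by simp
  also have "M * (2 ^ (2*n) - 1) = P1 * card S" using cnt2 by (simp add: mult.commute)
  also have "P1 * (\<Sum>W\<in>S. h W) / (P1 * card S) = (\<Sum>W\<in>S. h W) / card S"
    using P1pos by simp
  finally show ?thesis using ideal by (simp add: Y_def)
qed

lemma out_prob:
  assumes n: "n \<ge> 2"
  shows "measure_pmf.prob (out_dist n) A
       = ((\<Sum>y\<in>{r \<in> vecs n. has_k n r}. measure_pmf.prob (Bd (Sy n y)) A)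
          + 2 ^ n * measure_pmf.prob (Bd (Sy n (fvec n 1))) A) / 2 ^ (2*n)"
proof -
  define g where "g y = measure_pmf.prob (Bd (Sy n y)) A" for y
  define Gs where "Gs = {r \<in> vecs n. has_k n r}"
  define Bs where "Bs = {r \<in> vecs n. \<not> has_k n r}"
  have vne: "vecs n \<noteq> {}" using vecs_zero by blast
  have "measure_pmf.prob (out_dist n) A = (\<Sum>r\<in>vecs n. g (tau n r)) / card (vecs n)"
    unfolding out_dist_eq[OF n] g_def by (rule prob_bind_set[OF finite_vecs vne])
  also have "vecs n = Gs \<union> Bs" by (auto simp: Gs_def Bs_def)
  also have "(\<Sum>r\<in>Gs \<union> Bs. g (tau n r)) = (\<Sum>r\<in>Gs. g (tau n r)) + (\<Sum>r\<in>Bs. g (tau n r))"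
    by (rule sum.union_disjoint) (auto simp: Gs_def Bs_def intro: finite_subset[OF _ finite_vecs])
  also have "(\<Sum>r\<in>Gs. g (tau n r)) = (\<Sum>r\<in>Gs. g r)"
    unfolding Gs_def by (rule sum.reindex_bij_betw[OF tau_bij[OF n]])
  also have "(\<Sum>r\<in>Bs. g (tau n r)) = (\<Sum>r\<in>Bs. g (fvec n 1))"
    by (rule sum.cong[OF refl]) (simp add: Bs_def tau_bad)
  also have "\<dots> = 2 ^ n * g (fvec n 1)" using card_bad[of n] by (simp add: Bs_def)
  also have "card (Gs \<union> Bs) = 2 ^ (2*n)" using card_vecs[of n] \<open>vecs n = Gs \<union> Bs\<close> by simp
  finally show ?thesis by (simp add: g_def Gs_def)
qed

lemma Y_split:
  fixes g :: "(nat \<Rightarrow> bit) \<Rightarrow> real"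
  shows "(\<Sum>y\<in>vecs n - {\<lambda>_. 0}. g y)
     = (\<Sum>y\<in>{r \<in> vecs n. has_k n r}. g y) + (\<Sum>y\<in>{r \<in> vecs n. \<not> has_k n r} - {\<lambda>_. 0}. g y)"
proof -
  have nz: "\<not> has_k n (\<lambda>_. 0)" by (simp add: has_k_def)
  have "vecs n - {\<lambda>_. 0} = {r \<in> vecs n. has_k n r} \<union> ({r \<in> vecs n. \<not> has_k n r} - {\<lambda>_. 0})"
    using nz by auto
  then show ?thesis
    by (simp, subst sum.union_disjoint) (auto intro: finite_subset[OF _ finite_vecs])
qed

lemma tvd_bound:
  assumes n: "n \<ge> 2"
  shows "tvd (out_dist n) (ideal_dist n) \<le> 1 / 2 ^ n"
  unfolding tvd_def
proof (rule cSUP_least)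
  show "(UNIV :: (nat \<Rightarrow> bit) list set set) \<noteq> {}" by simp
next
  fix A :: "(nat \<Rightarrow> bit) list set"
  define g where "g y = measure_pmf.prob (Bd (Sy n y)) A" for y
  define Gs where "Gs = {r \<in> vecs n. has_k n r}"
  define Bs where "Bs = {r \<in> vecs n. \<not> has_k n r}"
  define a where "a = (\<Sum>y\<in>Gs. g y)"
  define b where "b = 2 ^ n * g (fvec n 1)"
  define c where "c = (\<Sum>y\<in>Bs - {\<lambda>_. 0}. g y)"
  define t where "t = (2::real) ^ n"
  have g01: "0 \<le> g y" "g y \<le> 1" for y by (simp_all add: g_def)
  have finG: "finite Gs" by (rule finite_subset[OF _ finite_vecs]) (auto simp: Gs_def)
  have finB: "finite Bs" by (rule finite_subset[OF _ finite_vecs]) (auto simp: Bs_def)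
  have cB: "card Bs = 2 ^ n" unfolding Bs_def by (rule card_bad)
  have cG: "card Gs + card Bs = 2 ^ (2*n)"
  proof -
    have "Gs \<union> Bs = vecs n" "Gs \<inter> Bs = {}" by (auto simp: Gs_def Bs_def)
    then show ?thesis using card_Un_disjoint[OF finG finB] card_vecs[of n] by simp
  qed
  have t2: "t^2 = 2 ^ (2*n)" by (simp add: t_def power_mult[symmetric] mult.commute)
  have t: "t \<ge> 2"
  proof -
    have "(2::real) ^ n \<ge> 2 ^ 1" by (rule power_increasing) (use n in auto)
    then show ?thesis by (simp add: t_def)
  qed
  have out: "measure_pmf.prob (out_dist n) A = (a + b) / t^2"
    using out_prob[OF n, of A] by (simp add: a_def b_def g_def Gs_def t2)
  have ideal: "measure_pmf.prob (ideal_dist n) A = (a + c) / (t^2 - 1)"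
    using ideal_prob[OF n, of A] Y_split[of g n] by (simp add: a_def c_def g_def Gs_def Bs_def t2)
  have a0: "0 \<le> a" unfolding a_def by (rule sum_nonneg) (simp add: g01)
  have a1: "a \<le> t^2 - t"
  proof -
    have "a \<le> (\<Sum>y\<in>Gs. 1)" unfolding a_def by (rule sum_mono) (simp add: g01)
    also have "\<dots> = real (card Gs)" by simp
    also have "\<dots> = t^2 - t"
    proof -
      have "card Gs + 2 ^ n = 2 ^ (2*n)" using cG cB by simp
      then have "real (card Gs + 2 ^ n) = real (2 ^ (2*n))" by (rule arg_cong)
      then have "real (card Gs) + 2 ^ n = 2 ^ (2*n)" by simp
      then show ?thesis using t2 unfolding t_def by linarith
    qed
    finally show ?thesis .
  qed
  have b0: "0 \<le> b" using g01 by (simp add: b_def)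
  have b1: "b \<le> t" using g01[of "fvec n 1"] by (simp add: b_def t_def)
  have c0: "0 \<le> c" unfolding c_def by (rule sum_nonneg) (simp add: g01)
  have c1: "c \<le> t - 1"
  proof -
    have "c \<le> (\<Sum>y\<in>Bs - {\<lambda>_. 0}. 1)" unfolding c_def by (rule sum_mono) (simp add: g01)
    also have "\<dots> = real (card (Bs - {\<lambda>_. 0}))" by simp
    also have "card (Bs - {\<lambda>_. 0}) = card Bs - 1"
      by (rule card_Diff_singleton) (auto simp: Bs_def has_k_def)
    finally show ?thesis using cB by (simp add: t_def)
  qed
  have "\<bar>(a + b) / t^2 - (a + c) / (t^2 - 1)\<bar> \<le> 1 / t"
    by (rule final_ineq[OF t a0 a1 b0 b1 c0 c1])
  then show "\<bar>measure_pmf.prob (out_dist n) A - measure_pmf.prob (ideal_dist n) A\<bar> \<le> 1 / 2 ^ n"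
    using out ideal by (simp add: t_def)
qed

theorem lemma4p3:
  shows "(\<forall>n\<ge>2. \<forall>r\<in>vecs n. \<forall>v\<in>vecs n. \<forall>w\<in>vecs n.
            symp n (Cmap n r v) (Cmap n r w) = symp n v w)
       \<and> (\<exists>\<epsilon>. negligible \<epsilon> \<and> (\<forall>n\<ge>2. tvd (out_dist n) (ideal_dist n) \<le> \<epsilon> n))"
proof
  show "\<forall>n\<ge>2. \<forall>r\<in>vecs n. \<forall>v\<in>vecs n. \<forall>w\<in>vecs n.
            symp n (Cmap n r v) (Cmap n r w) = symp n v w"
    using Cmap_good by (simp add: good_map_def)
  show "\<exists>\<epsilon>. negligible \<epsilon> \<and> (\<forall>n\<ge>2. tvd (out_dist n) (ideal_dist n) \<le> \<epsilon> n)"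
    using neg_pow2 tvd_bound by blast
qed

end
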